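(* Let $0<\alpha<1$, $F(x)=\sum_{j\ge0}2^{-\alpha j}\mathrm{dist}(2^jx,\mathbb{Z})$ on $[0,1]$, $\Omega=\{(x,y): 0\le x\le1,\ 0\le y\le F(x)\}$, $\Omega^c=\mathbb{R}^2\setminus\Omega$ and $f=\mathbf{1}_\Omega$. Let $x$ be the abscissa of a local maximum of $F$ and $X=(x,F(x))$. Then $E^w_{\Omega}(X)=E^s_{\Omega}(X)=\frac1\alpha-1$, $E^w_{\Omega^c}(X)=E^s_{\Omega^c}(X)=0$, and $u^p_f(X)=\frac1p\left(\frac1\alpha-1\right)$ for every $p\in[1,\infty]$.
   Context: $\mathrm{meas}$ is Lebesgue measure on $\mathbb{R}^2$, $B(X,r)$ the open disc. For $A\in\{\Omega,\Omega^c\}$ and $X_0\in\partial\Omega$: $E^w_A(X_0)$ is the supremum of $\beta$ such that there exist $C,r_0>0$ with $\mathrm{meas}(A\cap B(X_0,r))\le Cr^{\beta+2}$ for all $r\le r_0$; $E^s_A(X_0)$ is the infimum of $\beta$ such that there exist $C,r_0>0$ with $\mathrm{meas}(A\cap B(X_0,r))\ge Cr^{\beta+2}$ for all $r\le r_0$. For $g\in L^p_{loc}(\mathbb{R}^2)$, $g\in T^p_u(X_0)$ ($u\ge-2/p$) if there exist $R,C>0$ and a polynomial $P$ of degree $\le u$ with $\left(\rho^{-2}\int_{|X-X_0|\le\rho}|g-P|^p\right)^{1/p}\le C\rho^u$ for all $\rho\le R$; $u^p_g(X_0)=\sup\{u:g\in T^p_u(X_0)\}$. *)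

theory Defs
  imports "HOL-Analysis.Analysis" "HOL-Probability.Essential_Supremum"
begin

type_synonym pt = "real \<times> real"

definition Fw :: "real \<Rightarrow> real \<Rightarrow> real" where
  "Fw \<alpha> x = (\<Sum>j. 2 powr (- \<alpha> * real j) * infdist (2 ^ j * x) \<int>)"

definition Omega :: "real \<Rightarrow> pt set" where
  "Omega \<alpha> = {(x, y). 0 \<le> x \<and> x \<le> 1 \<and> 0 \<le> y \<and> y \<le> Fw \<alpha> x}"

definition Ew :: "pt set \<Rightarrow> pt \<Rightarrow> ereal" where
  "Ew A X0 = Sup (ereal ` {\<beta>. \<exists>C r0. C > 0 \<and> r0 > 0 \<and>
      (\<forall>r. 0 < r \<and> r \<le> r0 \<longrightarrow> measure lebesgue (A \<inter> ball X0 r) \<le> C * r powr (\<beta> + 2))})"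

definition Es :: "pt set \<Rightarrow> pt \<Rightarrow> ereal" where
  "Es A X0 = Inf (ereal ` {\<beta>. \<exists>C r0. C > 0 \<and> r0 > 0 \<and>
      (\<forall>r. 0 < r \<and> r \<le> r0 \<longrightarrow> measure lebesgue (A \<inter> ball X0 r) \<ge> C * r powr (\<beta> + 2))})"

text \<open>Polynomials in two real variables of total degree at most u (u real;
  for u < 0 only the zero polynomial).\<close>
definition poly2_deg_le :: "real \<Rightarrow> (pt \<Rightarrow> real) \<Rightarrow> bool" where
  "poly2_deg_le u P \<longleftrightarrow> (\<exists>c :: nat \<Rightarrow> nat \<Rightarrow> real.
     P = (\<lambda>(x, y). \<Sum>(i, j) \<in> {(i, j). real (i + j) \<le> u}. c i j * x ^ i * y ^ j))"

definition Lp_loc :: "real \<Rightarrow> (pt \<Rightarrow> real) \<Rightarrow> bool" where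
  "Lp_loc p g \<longleftrightarrow> g \<in> borel_measurable lebesgue \<and>
     (\<forall>K. compact K \<longrightarrow> (\<integral>\<^sup>+ X. ennreal (\<bar>g X\<bar> powr p) * indicator K X \<partial>lebesgue) < \<infinity>)"

definition Linf_loc :: "(pt \<Rightarrow> real) \<Rightarrow> bool" where
  "Linf_loc g \<longleftrightarrow> g \<in> borel_measurable lebesgue \<and>
     (\<forall>K. compact K \<longrightarrow> esssup (restrict_space lebesgue K) (\<lambda>X. ereal \<bar>g X\<bar>) < \<infinity>)"

definition Tp :: "real \<Rightarrow> real \<Rightarrow> (pt \<Rightarrow> real) \<Rightarrow> pt \<Rightarrow> bool" where
  "Tp p u g X0 \<longleftrightarrow> Lp_loc p g \<and> u \<ge> - 2 / p \<and>
     (\<exists>R C P. R > 0 \<and> C > 0 \<and> poly2_deg_le u P \<and>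
        (\<forall>\<rho>. 0 < \<rho> \<and> \<rho> \<le> R \<longrightarrow>
          (let I = \<integral>\<^sup>+ X. ennreal (\<bar>g X - P X\<bar> powr p) * indicator (cball X0 \<rho>) X \<partial>lebesgue
           in I < \<infinity> \<and> (\<rho> powr (-2) * enn2real I) powr (1 / p) \<le> C * \<rho> powr u)))"

definition Tinf :: "real \<Rightarrow> (pt \<Rightarrow> real) \<Rightarrow> pt \<Rightarrow> bool" where
  "Tinf u g X0 \<longleftrightarrow> Linf_loc g \<and> u \<ge> 0 \<and>
     (\<exists>R C P. R > 0 \<and> C > 0 \<and> poly2_deg_le u P \<and>
        (\<forall>\<rho>. 0 < \<rho> \<and> \<rho> \<le> R \<longrightarrow>
          esssup (restrict_space lebesgue (cball X0 \<rho>)) (\<lambda>X. ereal \<bar>g X - P X\<bar>)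
            \<le> ereal (C * \<rho> powr u)))"

definition up_exp :: "real \<Rightarrow> (pt \<Rightarrow> real) \<Rightarrow> pt \<Rightarrow> ereal" where
  "up_exp p g X0 = Sup (ereal ` {u. Tp p u g X0})"

definition uinf_exp :: "(pt \<Rightarrow> real) \<Rightarrow> pt \<Rightarrow> ereal" where
  "uinf_exp g X0 = Sup (ereal ` {u. Tinf u g X0})"

end

theory Submission
  imports Defs
begin


lemma phi_eq:
  fixes x n :: real
  assumes "n \<in> \<int>" "n \<le> x" "x \<le> n + 1"
  shows "infdist x \<int> = min (x - n) (n + 1 - x)"
proof -
  have ne: "(\<int>::real set) \<noteq> {}" using Ints_0 by blast
  have bdd: "bdd_below (dist x ` \<int>)" by (rule bdd_belowI[of _ 0]) auto
  have n1: "n + 1 \<in> \<int>" using assms(1) by simp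
  have "infdist x \<int> = Inf (dist x ` \<int>)" using ne by (simp add: infdist_def)
  moreover have "Inf (dist x ` \<int>) \<le> min (x - n) (n + 1 - x)"
  proof -
    have "Inf (dist x ` \<int>) \<le> dist x n" using assms(1) bdd by (intro cINF_lower) auto
    moreover have "Inf (dist x ` \<int>) \<le> dist x (n+1)" using n1 bdd by (intro cINF_lower) auto
    ultimately show ?thesis using assms by (simp add: dist_real_def)
  qed
  moreover have "min (x - n) (n + 1 - x) \<le> Inf (dist x ` \<int>)"
  proof (rule cINF_greatest[OF ne])
    fix z :: real assume "z \<in> \<int>"
    then obtain m where m: "z = of_int m" by (auto elim: Ints_cases)
    obtain k where k: "n = of_int k" using assms(1) by (auto elim: Ints_cases)
    have "m \<le> k \<or> m \<ge> k + 1" by linarith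
    then show "min (x - n) (n + 1 - x) \<le> dist x z"
    proof
      assume "m \<le> k" then have "z \<le> n" using m k by simp
      then show ?thesis using assms by (simp add: dist_real_def)
    next
      assume "m \<ge> k + 1" then have "z \<ge> n + 1" using m k by linarith
      then show ?thesis using assms by (simp add: dist_real_def)
    qed
  qed
  ultimately show ?thesis by (metis antisym)
qed

lemma phi_floor: "infdist (x::real) \<int> = min (x - of_int (floor x)) (of_int (floor x) + 1 - x)"
  by (rule phi_eq) (auto simp: of_int_floor_le)

lemma phi_01: "0 \<le> (x::real) \<Longrightarrow> x \<le> 1 \<Longrightarrow> infdist x \<int> = min x (1 - x)"
  using phi_eq[of 0 x] by simp

lemma phi_periodic: "m \<in> \<int> \<Longrightarrow> infdist ((x::real) + m) \<int> = infdist x \<int>"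
proof -
  assume m: "m \<in> \<int>"
  have "infdist (x + m) \<int> = min (x + m - (floor x + m)) (floor x + m + 1 - (x + m))"
    using m by (intro phi_eq) (auto simp: of_int_floor_le)
  also have "\<dots> = infdist x \<int>" using phi_floor[of x] by simp
  finally show ?thesis .
qed

lemma phi_neg: "infdist (- (x::real)) \<int> = infdist x \<int>"
proof -
  define n where "n = - of_int (floor x) - (1::real)"
  have "infdist (- x) \<int> = min (- x - n) (n + 1 - (- x))"
    by (rule phi_eq) (auto simp: n_def of_int_floor_le, linarith)
  also have "\<dots> = infdist x \<int>" using phi_floor[of x] by (simp add: n_def min.commute)
  finally show ?thesis .
qed

lemma phi_le: "infdist (x::real) \<int> \<le> 1/2"
  unfolding phi_floor by linarith

lemma phi_nonneg: "0 \<le> infdist (x::real) \<int>" by (rule infdist_nonneg)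

locale alph =
  fixes \<alpha> :: real
  assumes a0: "0 < \<alpha>" and a1: "\<alpha> < 1"
begin

definition lam where "lam = 2 powr (- \<alpha>)"
definition mu where "mu = 1 / (2 * lam)"
abbreviation F where "F \<equiv> Fw \<alpha>"

lemma lam_gt: "1/2 < lam" and lam_lt: "lam < 1"
proof -
  have "(2::real) powr (-1) < 2 powr (- \<alpha>)" using a1 by (intro powr_less_mono) auto
  then show "1/2 < lam" by (simp add: lam_def powr_minus)
  have "(2::real) powr (- \<alpha>) < 2 powr 0" using a0 by (intro powr_less_mono) auto
  then show "lam < 1" by (simp add: lam_def)
qed

lemma lam_pos: "0 < lam" using lam_gt by simp

lemma mu_gt: "1/2 < mu" and mu_lt: "mu < 1"
  using lam_gt lam_lt by (auto simp: mu_def field_simps)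

lemma lam_mu: "lam * mu * 2 = 1" using lam_pos by (simp add: mu_def)

lemma term_eq: "2 powr (- \<alpha> * real j) = lam ^ j"
  by (subst powr_realpow[symmetric]) (auto simp: lam_def powr_powr)

lemma F_def': "F x = (\<Sum>j. lam ^ j * infdist (2 ^ j * x) \<int>)"
  unfolding Fw_def term_eq by simp

lemma term_bound: "norm (lam ^ n * infdist (2 ^ n * (x::real)) \<int>) \<le> lam ^ n"
proof -
  have d: "0 \<le> infdist (2 ^ n * x) \<int>" "infdist (2 ^ n * x) \<int> \<le> 1"
    using phi_le[of "2 ^ n * x"] infdist_nonneg by auto
  have "0 \<le> lam ^ n" using lam_pos by simp
  then show ?thesis using d by (simp add: abs_mult mult_left_le)
qed

lemma term_nonneg: "0 \<le> lam ^ n * infdist (2 ^ n * (x::real)) \<int>"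
  using lam_pos by (simp add: infdist_nonneg)

lemma summ: "summable (\<lambda>j. lam ^ j * infdist (2 ^ j * (x::real)) \<int>)"
proof (rule summable_comparison_test)
  show "\<exists>N. \<forall>n\<ge>N. norm (lam ^ n * infdist (2 ^ n * x) \<int>) \<le> lam ^ n"
    using term_bound by blast
  show "summable (\<lambda>n. lam ^ n)" using lam_pos lam_lt by (intro summable_geometric) auto
qed

lemma F_rec: "F x = infdist x \<int> + lam * F (2 * x)"
proof -
  have "(\<Sum>n. lam ^ Suc n * infdist (2 ^ Suc n * x) \<int>) = F x - infdist x \<int>"
    using suminf_split_head[OF summ[of x]] by (simp add: F_def')
  moreover have "(\<Sum>n. lam ^ Suc n * infdist (2 ^ Suc n * x) \<int>) = lam * F (2 * x)"
    unfolding F_def' using summ[of "2*x"]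
    by (subst suminf_mult[symmetric]) (auto simp: mult_ac)
  ultimately show ?thesis by simp
qed

lemma F_nonneg: "0 \<le> F x"
  unfolding F_def' using summ[of x] lam_pos
  by (intro suminf_nonneg) (auto intro: term_nonneg)

lemma F_periodic: "F (x + 1) = F x"
proof -
  have "infdist (2 ^ j * (x + 1)) \<int> = infdist (2 ^ j * x) \<int>" for j :: nat
  proof -
    have "(2::real) ^ j \<in> \<int>" by simp
    then show ?thesis using phi_periodic[of "2^j" "2^j*x"] by (simp add: algebra_simps)
  qed
  then show ?thesis by (simp add: F_def')
qed

lemma F_neg: "F (- x) = F x"
  using phi_neg[of "2 ^ _ * x"] by (simp add: F_def')

lemma F_sym: "F (1 - x) = F x"
  using F_periodic[of "- x"] F_neg[of x] by simp

lemma F_cont: "continuous_on UNIV F"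
proof -
  have ul: "uniform_limit UNIV (\<lambda>n (x::real). \<Sum>i<n. lam ^ i * infdist (2 ^ i * x) \<int>)
       (\<lambda>x. \<Sum>i. lam ^ i * infdist (2 ^ i * x) \<int>) sequentially"
  proof (rule Weierstrass_m_test)
    show "norm (lam ^ n * infdist (2 ^ n * x) \<int>) \<le> lam ^ n" for n and x :: real
      by (rule term_bound)
    show "summable (\<lambda>n. lam ^ n)" using lam_pos lam_lt by (intro summable_geometric) auto
  qed
  have "continuous_on UNIV (\<lambda>x::real. \<Sum>i. lam ^ i * infdist (2 ^ i * x) \<int>)"
    by (rule uniform_limit_theorem[OF _ ul])
       (auto intro!: always_eventually continuous_intros continuous_on_infdist)
  then show ?thesis by (simp add: F_def'[abs_def])
qed

lemma F0: "F 0 = 0" by (simp add: F_def')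
lemma F1: "F 1 = 0" using F_periodic[of 0] F0 by simp

lemma F_left: "0 \<le> u \<Longrightarrow> u \<le> 1/2 \<Longrightarrow> F u = u + lam * F (2 * u)"
  using F_rec[of u] phi_01[of u] by simp

lemma F_right: "1/2 \<le> u \<Longrightarrow> u \<le> 1 \<Longrightarrow> F u = 1 - u + lam * F (2 * u - 1)"
  using F_rec[of u] phi_01[of u] F_periodic[of "2*u-1"] by simp

definition c0 where "c0 = 1 / (3 * (1 - lam))"

lemma F13: "F (1/3) = c0" and F23: "F (2/3) = c0"
proof -
  have "F (1/3) = 1/3 + lam * F (2/3)" using F_left[of "1/3"] by simp
  moreover have "F (2/3) = F (1/3)" using F_sym[of "1/3"] by simp
  ultimately have "F (1/3) * (1 - lam) = 1/3" by (simp add: algebra_simps)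
  then show "F (1/3) = c0" using lam_lt by (simp add: c0_def field_simps)
  then show "F (2/3) = c0" using F_sym[of "1/3"] by simp
qed

lemma F12: "F (1/2) = 1/2" using F_left[of "1/2"] F1 by simp

lemma c0_gt: "2/3 < c0" using lam_gt lam_lt by (simp add: c0_def field_simps)

end


context alph begin

definition G where "G \<sigma> u = \<sigma> * u + F u"

lemma G_left: "0 \<le> u \<Longrightarrow> u \<le> 1/2 \<Longrightarrow> G \<sigma> u = lam * G (mu * (\<sigma> + 1)) (2 * u)"
  using F_left[of u] lam_mu by (simp add: G_def algebra_simps)

lemma lm: "lam * mu = 1/2" using lam_pos by (simp add: mu_def)

lemma G_right: "1/2 \<le> u \<Longrightarrow> u \<le> 1 \<Longrightarrow>
   G \<sigma> u = (\<sigma> + 1) / 2 + lam * G (mu * (\<sigma> - 1)) (2 * u - 1)"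
proof -
  assume u: "1/2 \<le> u" "u \<le> 1"
  have e: "lam * (mu * (\<sigma> - 1) * (2 * u - 1)) = (\<sigma> - 1) * (2 * u - 1) / 2"
    by (simp add: mult.assoc[symmetric] lm)
  have e1: "G \<sigma> u = \<sigma> * u + (1 - u + lam * F (2 * u - 1))" using F_right[OF u] by (simp add: G_def)
  have e2: "(\<sigma> + 1) / 2 + lam * G (mu * (\<sigma> - 1)) (2 * u - 1)
      = (\<sigma> + 1) / 2 + (\<sigma> - 1) * (2 * u - 1) / 2 + lam * F (2 * u - 1)"
    by (simp add: G_def distrib_left e)
  show ?thesis unfolding e1 e2 by (simp add: field_simps)
qed

lemma G_refl: "G (- \<sigma>) (1 - u) = G \<sigma> u - \<sigma>"
  using F_sym[of u] by (simp add: G_def algebra_simps)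

lemma G_swap: "G \<sigma> (1 - u) - G \<sigma> u = \<sigma> * (1 - 2 * u)"
  using F_sym[of u] by (simp add: G_def algebra_simps)

lemma G_half: "\<exists>v. 0 \<le> v \<and> v \<le> 1 \<and> G \<sigma> (1/2) < G \<sigma> v"
proof -
  have h: "G \<sigma> (1/2) = \<sigma>/2 + 1/2" using F12 by (simp add: G_def)
  consider "\<sigma> > 1" | "\<sigma> < -1" | "0 \<le> \<sigma> \<and> \<sigma> \<le> 1" | "-1 \<le> \<sigma> \<and> \<sigma> < 0" by linarith
  then show ?thesis
  proof cases
    case 1 then show ?thesis using h F1 by (intro exI[of _ 1]) (simp add: G_def)
  next
    case 2 then show ?thesis using h F0 by (intro exI[of _ 0]) (simp add: G_def)
  next
    case 3 then show ?thesis using h F23 c0_gt by (intro exI[of _ "2/3"]) (simp add: G_def)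
  next
    case 4 then show ?thesis using h F13 c0_gt by (intro exI[of _ "1/3"]) (simp add: G_def)
  qed
qed

lemma G_cont: "continuous_on S (G \<sigma>)"
  unfolding G_def[abs_def]
  by (intro continuous_intros continuous_on_subset[OF F_cont]) auto

definition Rep where
  "Rep H n a \<sigma> A \<longleftrightarrow> (\<forall>t. a \<le> t \<and> t \<le> a + 1 / 2 ^ n \<longrightarrow> H t = A + lam ^ n * G \<sigma> (2 ^ n * (t - a)))"

lemma Rep_left: "Rep H n a \<sigma> A \<Longrightarrow> Rep H (Suc n) a (mu * (\<sigma> + 1)) A"
  unfolding Rep_def
proof (intro allI impI)
  fix t assume R: "\<forall>t. a \<le> t \<and> t \<le> a + 1 / 2 ^ n \<longrightarrow> H t = A + lam ^ n * G \<sigma> (2 ^ n * (t - a))"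
    and t: "a \<le> t \<and> t \<le> a + 1 / 2 ^ Suc n"
  have p: "(0::real) < 2 ^ n" by simp
  have "t \<le> a + 1 / 2 ^ n" using t p by (simp add: field_simps)
  then have "H t = A + lam ^ n * G \<sigma> (2 ^ n * (t - a))" using R t by blast
  moreover have "0 \<le> 2 ^ n * (t - a)" "2 ^ n * (t - a) \<le> 1/2"
    using t p by (auto simp: field_simps)
  ultimately show "H t = A + lam ^ Suc n * G (mu * (\<sigma> + 1)) (2 ^ Suc n * (t - a))"
    using G_left[of "2 ^ n * (t - a)" \<sigma>] by (simp add: mult_ac)
qed

lemma Rep_right: "Rep H n a \<sigma> A \<Longrightarrow>
   Rep H (Suc n) (a + 1 / 2 ^ Suc n) (mu * (\<sigma> - 1)) (A + lam ^ n * ((\<sigma> + 1) / 2))"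
  unfolding Rep_def
proof (intro allI impI)
  fix t assume R: "\<forall>t. a \<le> t \<and> t \<le> a + 1 / 2 ^ n \<longrightarrow> H t = A + lam ^ n * G \<sigma> (2 ^ n * (t - a))"
    and t: "a + 1 / 2 ^ Suc n \<le> t \<and> t \<le> a + 1 / 2 ^ Suc n + 1 / 2 ^ Suc n"
  have p: "(0::real) < 2 ^ n" by simp
  have h0: "0 \<le> 1 / (2::real) ^ Suc n" by simp
  have h1: "1 / (2::real) ^ Suc n + 1 / 2 ^ Suc n = 1 / 2 ^ n" by simp
  have "a \<le> t" using t h0 by linarith
  moreover have "t \<le> a + 1 / 2 ^ n" using t h1 by linarith
  ultimately have "H t = A + lam ^ n * G \<sigma> (2 ^ n * (t - a))" using R by blast
  moreover have "1/2 \<le> 2 ^ n * (t - a)"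
  proof -
    have "2 ^ n * (1 / 2 ^ Suc n) \<le> 2 ^ n * (t - (a::real))" using t p by (intro mult_left_mono) auto
    then show ?thesis by simp
  qed
  moreover have "2 ^ n * (t - a) \<le> 1"
  proof -
    have "2 ^ n * (t - a) \<le> 2 ^ n * (1 / (2::real) ^ n)" using t h1 p by (intro mult_left_mono) auto
    then show ?thesis by simp
  qed
  moreover have "2 * (2 ^ n * (t - a)) - 1 = 2 ^ Suc n * (t - (a + 1 / 2 ^ Suc n))"
  proof -
    have q: "(2::real) ^ Suc n * (1 / 2 ^ Suc n) = 1" by (simp del: power_Suc)
    have "2 ^ Suc n * (t - (a + 1 / 2 ^ Suc n)) = 2 ^ Suc n * t - 2 ^ Suc n * a - 1"
      by (simp only: right_diff_distrib distrib_left q)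
    then show ?thesis by (simp add: right_diff_distrib)
  qed
  ultimately show "H t = A + lam ^ n * ((\<sigma> + 1) / 2) + lam ^ Suc n * G (mu * (\<sigma> - 1)) (2 ^ Suc n * (t - (a + 1 / 2 ^ Suc n)))"
    using G_right[of "2 ^ n * (t - a)" \<sigma>] by (simp add: algebra_simps)
qed

definition State where
  "State H x n a \<sigma> A \<longleftrightarrow> Rep H n a \<sigma> A \<and> a \<le> x \<and> x \<le> a + 1 / 2 ^ n \<and> 0 \<le> a \<and> a + 1 / 2 ^ n \<le> 1 \<and>
     (\<forall>t. a \<le> t \<and> t \<le> a + 1 / 2 ^ n \<longrightarrow> H t \<le> H x)"

lemma State_max:
  assumes "State H x n a \<sigma> A"
  shows "0 \<le> 2 ^ n * (x - a)" "2 ^ n * (x - a) \<le> 1"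
    "\<And>v. 0 \<le> v \<Longrightarrow> v \<le> 1 \<Longrightarrow> G \<sigma> v \<le> G \<sigma> (2 ^ n * (x - a))"
proof -
  have p: "(0::real) < 2 ^ n" by simp
  from assms have R: "Rep H n a \<sigma> A" and x: "a \<le> x" "x \<le> a + 1 / 2 ^ n"
    and M: "\<And>t. a \<le> t \<Longrightarrow> t \<le> a + 1 / 2 ^ n \<Longrightarrow> H t \<le> H x"
    unfolding State_def by auto
  show "0 \<le> 2 ^ n * (x - a)" "2 ^ n * (x - a) \<le> 1" using x p by (auto simp: field_simps)
  fix v :: real assume v: "0 \<le> v" "v \<le> 1"
  define t where "t = a + v / 2 ^ n"
  have t: "a \<le> t" "t \<le> a + 1 / 2 ^ n" using v p by (auto simp: t_def field_simps)
  have "H t = A + lam ^ n * G \<sigma> v" using R t p unfolding Rep_def t_def by auto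
  moreover have "H x = A + lam ^ n * G \<sigma> (2 ^ n * (x - a))" using R x unfolding Rep_def by auto
  ultimately have "lam ^ n * G \<sigma> v \<le> lam ^ n * G \<sigma> (2 ^ n * (x - a))" using M[OF t] by simp
  then show "G \<sigma> v \<le> G \<sigma> (2 ^ n * (x - a))" using lam_pos by simp
qed

lemma State_step:
  assumes S: "State H x n a \<sigma> A"
  defines "y \<equiv> 2 ^ n * (x - a)"
  shows "(y > 1/2 \<and> \<sigma> \<ge> 0 \<and> State H x (Suc n) (a + 1 / 2 ^ Suc n) (mu * (\<sigma> - 1)) (A + lam ^ n * ((\<sigma> + 1) / 2))
          \<and> 2 ^ Suc n * (x - (a + 1 / 2 ^ Suc n)) = 2 * y - 1)
       \<or> (y < 1/2 \<and> \<sigma> \<le> 0 \<and> State H x (Suc n) a (mu * (\<sigma> + 1)) A \<and> 2 ^ Suc n * (x - a) = 2 * y)"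
proof -
  have p: "(0::real) < 2 ^ n" by simp
  note m = State_max[OF S, folded y_def]
  from S have R: "Rep H n a \<sigma> A" and x: "a \<le> x" "x \<le> a + 1 / 2 ^ n" and a: "0 \<le> a" "a + 1 / 2 ^ n \<le> 1"
    and M: "\<forall>t. a \<le> t \<and> t \<le> a + 1 / 2 ^ n \<longrightarrow> H t \<le> H x"
    unfolding State_def by auto
  have yne: "y \<noteq> 1/2"
  proof
    assume "y = 1/2"
    obtain v where "0 \<le> v" "v \<le> 1" "G \<sigma> (1/2) < G \<sigma> v" using G_half by blast
    then show False using m(3)[of v] \<open>y = 1/2\<close> by simp
  qed
  show ?thesis
  proof (cases "y > 1/2")
    case True
    have sg: "\<sigma> \<ge> 0"
    proof (rule ccontr)
      assume "\<not> 0 \<le> \<sigma>"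
      then have "G \<sigma> (1 - y) - G \<sigma> y > 0" using True G_swap[of \<sigma> y] by (simp add: mult_neg_neg)
      then show False using m(3)[of "1 - y"] m(1,2) by simp
    qed
    have x2: "a + 1 / 2 ^ Suc n \<le> x" using True p by (simp add: y_def field_simps)
    have e: "a + 1 / 2 ^ Suc n + 1 / 2 ^ Suc n = a + 1 / 2 ^ n" by (simp add: field_simps)
    have h0: "0 \<le> 1 / (2::real) ^ Suc n" by simp
    have M': "\<forall>t. a + 1 / 2 ^ Suc n \<le> t \<and> t \<le> a + 1 / 2 ^ n \<longrightarrow> H t \<le> H x"
    proof (intro allI impI)
      fix t assume t: "a + 1 / 2 ^ Suc n \<le> t \<and> t \<le> a + 1 / 2 ^ n"
      then have "a \<le> t" using h0 by linarith
      then show "H t \<le> H x" using M t by blast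
    qed
    have a0: "0 \<le> a + 1 / 2 ^ Suc n" using a(1) h0 by linarith
    have "State H x (Suc n) (a + 1 / 2 ^ Suc n) (mu * (\<sigma> - 1)) (A + lam ^ n * ((\<sigma> + 1) / 2))"
      unfolding State_def e using Rep_right[OF R] x2 x(2) a0 a(2) M' by blast
    moreover have "2 ^ Suc n * (x - (a + 1 / 2 ^ Suc n)) = 2 * y - 1"
      by (simp add: y_def field_simps)
    ultimately show ?thesis using True sg by blast
  next
    case False
    then have yl: "y < 1/2" using yne by simp
    have sg: "\<sigma> \<le> 0"
    proof (rule ccontr)
      assume "\<not> \<sigma> \<le> 0"
      then have "G \<sigma> (1 - y) - G \<sigma> y > 0" using yl G_swap[of \<sigma> y] by simp
      then show False using m(3)[of "1 - y"] m(1,2) by simp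
    qed
    have x2: "x \<le> a + 1 / 2 ^ Suc n" using yl p by (simp add: y_def field_simps)
    have a2: "a + 1 / 2 ^ Suc n \<le> 1" using a p by (simp add: field_simps)
    have M': "\<forall>t. a \<le> t \<and> t \<le> a + 1 / 2 ^ Suc n \<longrightarrow> H t \<le> H x"
    proof (intro allI impI)
      fix t assume t: "a \<le> t \<and> t \<le> a + 1 / 2 ^ Suc n"
      have "1 / (2::real) ^ Suc n \<le> 1 / 2 ^ n" by (simp add: field_simps)
      then have "t \<le> a + 1 / 2 ^ n" using t by linarith
      then show "H t \<le> H x" using M t by blast
    qed
    have "State H x (Suc n) a (mu * (\<sigma> + 1)) A"
      unfolding State_def using Rep_left[OF R] x(1) x2 a(1) a2 M' by blast
    moreover have "2 ^ Suc n * (x - a) = 2 * y" by (simp add: y_def)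
    ultimately show ?thesis using yl sg by blast
  qed
qed

end


context alph begin

definition Reg where "Reg \<sigma> \<longleftrightarrow> mu * (1 - mu) \<le> \<bar>\<sigma>\<bar> \<and> \<bar>\<sigma>\<bar> \<le> mu"
definition ys where "ys \<sigma> = (if \<sigma> > 0 then 2/3 else (1/3::real))"

lemma mu_pos: "0 < mu" using mu_gt by simp

lemma stage1_aux:
  "\<forall>n a \<sigma> A. State H x n a \<sigma> A \<and> \<bar>\<sigma>\<bar> \<le> real k + 1 \<longrightarrow>
     (\<exists>n' a' \<sigma>' A'. State H x n' a' \<sigma>' A' \<and> \<bar>\<sigma>'\<bar> \<le> 1)"
proof (induction k)
  case 0 then show ?case by auto
next
  case (Suc k)
  show ?case
  proof (intro allI impI)
    fix n a \<sigma> A assume h: "State H x n a \<sigma> A \<and> \<bar>\<sigma>\<bar> \<le> real (Suc k) + 1"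
    show "\<exists>n' a' \<sigma>' A'. State H x n' a' \<sigma>' A' \<and> \<bar>\<sigma>'\<bar> \<le> 1"
    proof (cases "\<bar>\<sigma>\<bar> \<le> 1")
      case True then show ?thesis using h by blast
    next
      case False
      from State_step[OF conjunct1[OF h]] show ?thesis
      proof (elim disjE conjE)
        assume s: "\<sigma> \<ge> 0" and S: "State H x (Suc n) (a + 1 / 2 ^ Suc n) (mu * (\<sigma> - 1)) (A + lam ^ n * ((\<sigma> + 1) / 2))"
        have "\<bar>mu * (\<sigma> - 1)\<bar> \<le> real k + 1"
        proof -
          have "\<sigma> > 1" using s False by simp
          then have "mu * (\<sigma> - 1) \<le> \<sigma> - 1" "0 \<le> mu * (\<sigma> - 1)" using mu_lt mu_pos by (auto intro: mult_left_le_one_le)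
          then show ?thesis using h by simp
        qed
        then show ?thesis using Suc.IH S by blast
      next
        assume s: "\<sigma> \<le> 0" and S: "State H x (Suc n) a (mu * (\<sigma> + 1)) A"
        have "\<bar>mu * (\<sigma> + 1)\<bar> \<le> real k + 1"
        proof -
          have "\<sigma> < -1" using s False by simp
          then have "mu * (- \<sigma> - 1) \<le> - \<sigma> - 1" "0 \<le> mu * (- \<sigma> - 1)" using mu_lt mu_pos by (auto intro: mult_left_le_one_le)
          then show ?thesis using h by (simp add: abs_if algebra_simps)
        qed
        then show ?thesis using Suc.IH S by blast
      qed
    qed
  qed
qed

lemma stage1: "State H x n a \<sigma> A \<Longrightarrow> \<exists>n' a' \<sigma>' A'. State H x n' a' \<sigma>' A' \<and> \<bar>\<sigma>'\<bar> \<le> 1"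
proof -
  assume S: "State H x n a \<sigma> A"
  obtain k :: nat where "\<bar>\<sigma>\<bar> \<le> real k" using real_arch_simple by blast
  then show ?thesis using stage1_aux[of H x k] S by force
qed

lemma step_small: "State H x n a \<sigma> A \<Longrightarrow> \<bar>\<sigma>\<bar> \<le> 1 \<Longrightarrow>
   \<exists>n' a' \<sigma>' A'. State H x n' a' \<sigma>' A' \<and> \<bar>\<sigma>'\<bar> = mu * (1 - \<bar>\<sigma>\<bar>)"
proof -
  assume S: "State H x n a \<sigma> A" and b: "\<bar>\<sigma>\<bar> \<le> 1"
  from State_step[OF S] show ?thesis
  proof (elim disjE conjE)
    assume s: "\<sigma> \<ge> 0" and S: "State H x (Suc n) (a + 1 / 2 ^ Suc n) (mu * (\<sigma> - 1)) (A + lam ^ n * ((\<sigma> + 1) / 2))"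
    have "\<bar>mu * (\<sigma> - 1)\<bar> = mu * (1 - \<bar>\<sigma>\<bar>)" using s b mu_pos by (simp add: abs_mult algebra_simps)
    then show ?thesis using S by blast
  next
    assume s: "\<sigma> \<le> 0" and S: "State H x (Suc n) a (mu * (\<sigma> + 1)) A"
    have "0 \<le> mu * (\<sigma> + 1)" using b mu_pos by (intro mult_nonneg_nonneg) auto
    then have "\<bar>mu * (\<sigma> + 1)\<bar> = mu * (\<sigma> + 1)" by simp
    also have "\<dots> = mu * (1 - \<bar>\<sigma>\<bar>)" using s by simp
    finally have "\<bar>mu * (\<sigma> + 1)\<bar> = mu * (1 - \<bar>\<sigma>\<bar>)" .
    then show ?thesis using S by blast
  qed
qed

lemma stage2: "State H x n a \<sigma> A \<Longrightarrow> \<exists>n' a' \<sigma>' A'. State H x n' a' \<sigma>' A' \<and> Reg \<sigma>'"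
proof -
  assume S: "State H x n a \<sigma> A"
  obtain n1 a1 \<sigma>1 A1 where S1: "State H x n1 a1 \<sigma>1 A1" "\<bar>\<sigma>1\<bar> \<le> 1" using stage1[OF S] by blast
  obtain n2 a2 \<sigma>2 A2 where S2: "State H x n2 a2 \<sigma>2 A2" "\<bar>\<sigma>2\<bar> = mu * (1 - \<bar>\<sigma>1\<bar>)"
    using step_small[OF S1] by blast
  have b2: "\<bar>\<sigma>2\<bar> \<le> mu" using S2(2) mu_pos by (simp add: mult_left_le_one_le)
  then have b2': "\<bar>\<sigma>2\<bar> \<le> 1" using mu_lt by simp
  obtain n3 a3 \<sigma>3 A3 where S3: "State H x n3 a3 \<sigma>3 A3" "\<bar>\<sigma>3\<bar> = mu * (1 - \<bar>\<sigma>2\<bar>)"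
    using step_small[OF S2(1) b2'] by blast
  have "Reg \<sigma>3" unfolding Reg_def S3(2) using b2 mu_pos
    by (auto intro: mult_left_mono mult_left_le_one_le)
  then show ?thesis using S3 by blast
qed

lemma stage3_aux:
  "\<forall>n a \<sigma> A. State H x n a \<sigma> A \<and> Reg \<sigma> \<longrightarrow> \<bar>2 ^ n * (x - a) - ys \<sigma>\<bar> \<le> 1 / 2 ^ k"
proof (induction k)
  case 0
  show ?case
  proof (intro allI impI)
    fix n a \<sigma> A assume h: "State H x n a \<sigma> A \<and> Reg \<sigma>"
    have "0 \<le> 2 ^ n * (x - a)" "2 ^ n * (x - a) \<le> 1" using State_max(1,2)[OF conjunct1[OF h]] by auto
    then show "\<bar>2 ^ n * (x - a) - ys \<sigma>\<bar> \<le> 1 / 2 ^ 0" by (auto simp: ys_def)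
  qed
next
  case (Suc k)
  show ?case
  proof (intro allI impI)
    fix n a \<sigma> A assume h: "State H x n a \<sigma> A \<and> Reg \<sigma>"
    then have R: "mu * (1 - mu) \<le> \<bar>\<sigma>\<bar>" "\<bar>\<sigma>\<bar> \<le> mu" by (auto simp: Reg_def)
    have mm: "0 < mu * (1 - mu)" using mu_pos mu_lt by simp
    define y where "y = 2 ^ n * (x - a)"
    from State_step[OF conjunct1[OF h], folded y_def] show "\<bar>2 ^ n * (x - a) - ys \<sigma>\<bar> \<le> 1 / 2 ^ Suc k"
    proof (elim disjE conjE)
      assume s: "\<sigma> \<ge> 0" and S: "State H x (Suc n) (a + 1 / 2 ^ Suc n) (mu * (\<sigma> - 1)) (A + lam ^ n * ((\<sigma> + 1) / 2))"
        and y': "2 ^ Suc n * (x - (a + 1 / 2 ^ Suc n)) = 2 * y - 1"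
      have sp: "\<sigma> > 0" using s R mm by simp
      have "\<bar>mu * (\<sigma> - 1)\<bar> = mu * (1 - \<sigma>)" using s R mu_lt mu_pos by (simp add: abs_mult algebra_simps)
      moreover have "mu * (1 - mu) \<le> mu * (1 - \<sigma>)" "mu * (1 - \<sigma>) \<le> mu"
        using R s mu_pos by (auto intro: mult_left_mono mult_left_le_one_le)
      ultimately have Rg: "Reg (mu * (\<sigma> - 1))" unfolding Reg_def by simp
      have "\<sigma> - 1 < 0" using R mu_lt by simp
      then have neg: "\<not> mu * (\<sigma> - 1) > 0" using mult_pos_neg[OF mu_pos] by fastforce
      have "\<bar>2 * y - 1 - 1/3\<bar> \<le> 1 / 2 ^ k" using Suc.IH S Rg neg y' by (force simp: ys_def)
      then show ?thesis using sp by (simp add: ys_def y_def[symmetric] abs_if split: if_splits)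
    next
      assume s: "\<sigma> \<le> 0" and S: "State H x (Suc n) a (mu * (\<sigma> + 1)) A"
        and y': "2 ^ Suc n * (x - a) = 2 * y"
      have sp: "\<sigma> < 0" using s R mm by simp
      have "0 \<le> mu * (\<sigma> + 1)" using R mu_lt mu_pos by (intro mult_nonneg_nonneg) auto
      then have "\<bar>mu * (\<sigma> + 1)\<bar> = mu * (1 + \<sigma>)" by (simp add: add.commute)
      moreover have "mu * (1 - mu) \<le> mu * (1 + \<sigma>)" "mu * (1 + \<sigma>) \<le> mu"
        using R s mu_pos by (auto intro: mult_left_mono mult_left_le_one_le)
      ultimately have Rg: "Reg (mu * (\<sigma> + 1))" unfolding Reg_def by simp
      have pos: "mu * (\<sigma> + 1) > 0" using R s mu_lt mu_pos by simp
      have "\<bar>2 * y - 2/3\<bar> \<le> 1 / 2 ^ k" using Suc.IH S Rg pos y' by (force simp: ys_def)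
      then show ?thesis using sp by (simp add: ys_def y_def[symmetric] abs_if split: if_splits)
    qed
  qed
qed

lemma stage3: "State H x n a \<sigma> A \<Longrightarrow> Reg \<sigma> \<Longrightarrow> 2 ^ n * (x - a) = ys \<sigma>"
proof (rule ccontr)
  assume S: "State H x n a \<sigma> A" "Reg \<sigma>" and ne: "2 ^ n * (x - a) \<noteq> ys \<sigma>"
  then have d: "0 < \<bar>2 ^ n * (x - a) - ys \<sigma>\<bar>" by simp
  obtain k where "(1/2::real) ^ k < \<bar>2 ^ n * (x - a) - ys \<sigma>\<bar>" using real_arch_pow_inv[OF d] by force
  moreover have "\<bar>2 ^ n * (x - a) - ys \<sigma>\<bar> \<le> 1 / 2 ^ k" using stage3_aux[of H x k] S by blast
  ultimately show False by (simp add: power_one_over)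
qed

end


context alph begin

lemma G_max23:
  assumes "mu * (1 - mu) \<le> \<sigma>" "\<sigma> \<le> mu" "0 \<le> v" "v \<le> 1"
  shows "G \<sigma> v \<le> G \<sigma> (2/3)"
proof -
  obtain y0 where y0: "y0 \<in> {0..1}" "\<forall>v\<in>{0..1}. G \<sigma> v \<le> G \<sigma> y0"
    using continuous_attains_sup[of "{0..1::real}" "G \<sigma>"] G_cont by auto
  have S: "State (G \<sigma>) y0 0 0 \<sigma> 0" unfolding State_def Rep_def using y0 by auto
  have mm: "0 < mu * (1 - mu)" using mu_pos mu_lt by simp
  have "Reg \<sigma>" using assms mm by (simp add: Reg_def)
  from stage3[OF S this] have "y0 = 2/3" using assms mm by (simp add: ys_def)
  moreover have "G \<sigma> v \<le> G \<sigma> y0" using y0(2) assms by auto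
  ultimately show ?thesis by metis
qed

lemma c0_eq: "c0 = 1/3 + lam * c0"
  using lam_lt by (simp add: c0_def field_simps)

lemma F_le_c0_half: "0 \<le> u \<Longrightarrow> u \<le> 1/2 \<Longrightarrow> F u \<le> c0"
proof -
  assume u: "0 \<le> u" "u \<le> 1/2"
  have "F u = G 0 u" by (simp add: G_def)
  also have "\<dots> = lam * G mu (2 * u)" using G_left[OF u, of 0] by simp
  also have "\<dots> \<le> lam * G mu (2/3)"
    using G_max23[of mu "2 * u"] u lam_pos mu_pos mu_lt
    by (intro mult_left_mono) (auto intro: mult_left_le_one_le)
  also have "\<dots> = lam * mu * 2 / 3 + lam * c0" by (simp add: G_def F23 algebra_simps)
  also have "\<dots> = c0" using lm c0_eq by simp
  finally show ?thesis .
qed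

lemma F_le_c0: "0 \<le> u \<Longrightarrow> u \<le> 1 \<Longrightarrow> F u \<le> c0"
proof -
  assume u: "0 \<le> u" "u \<le> 1"
  show ?thesis
  proof (cases "u \<le> 1/2")
    case True then show ?thesis using F_le_c0_half u by simp
  next
    case False then show ?thesis using F_le_c0_half[of "1 - u"] F_sym[of u] u by simp
  qed
qed

definition cD where "cD = mu * (1 - mu) / 6"
definition KD where "KD = 6 * (1 + c0)"

lemma lam_2powr: "lam * 2 powr \<alpha> = 1"
  by (simp add: lam_def powr_add[symmetric])

lemma decay23_aux:
  "\<forall>\<sigma> u. mu * (1 - mu) \<le> \<sigma> \<and> \<sigma> \<le> mu \<and> 0 \<le> u \<and> u \<le> 1 \<and> 1 / 2 ^ k \<le> \<bar>u - 2/3\<bar> \<longrightarrow>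
     cD * \<bar>u - 2/3\<bar> powr \<alpha> \<le> G \<sigma> (2/3) - G \<sigma> u \<and> G \<sigma> (2/3) - G \<sigma> u \<le> KD * \<bar>u - 2/3\<bar> powr \<alpha>"
proof (induction k)
  case 0
  show ?case by auto
next
  case (Suc k)
  show ?case
  proof (intro allI impI)
    fix \<sigma> u :: real
    assume h: "mu * (1 - mu) \<le> \<sigma> \<and> \<sigma> \<le> mu \<and> 0 \<le> u \<and> u \<le> 1 \<and> 1 / 2 ^ Suc k \<le> \<bar>u - 2/3\<bar>"
    have sp: "0 \<le> \<sigma>" using h mu_pos mu_lt by (meson less_eq_real_def mult_pos_pos diff_gt_0_iff_gt order_trans)
    have d1: "\<bar>u - 2/3\<bar> \<le> 1" using h by auto
    show "cD * \<bar>u - 2/3\<bar> powr \<alpha> \<le> G \<sigma> (2/3) - G \<sigma> u \<and> G \<sigma> (2/3) - G \<sigma> u \<le> KD * \<bar>u - 2/3\<bar> powr \<alpha>"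
    proof (cases "u < 1/2")
      case True
      have Fu: "0 \<le> F u" "F u \<le> c0" using F_nonneg F_le_c0[of u] h by auto
      have eq: "G \<sigma> (2/3) - G \<sigma> u = \<sigma> * (2/3 - u) + (c0 - F u)" by (simp add: G_def F23 algebra_simps)
      have "\<sigma> * (1/6) \<le> \<sigma> * (2/3 - u)" using True sp by (intro mult_left_mono) auto
      then have lo: "mu * (1 - mu) / 6 \<le> G \<sigma> (2/3) - G \<sigma> u" using eq Fu h by simp
      have pw1: "\<bar>u - 2/3\<bar> powr \<alpha> \<le> 1" using d1 a0 by (intro powr_le1) auto
      have cDp: "0 \<le> cD" using mu_pos mu_lt by (simp add: cD_def)
      have "cD * \<bar>u - 2/3\<bar> powr \<alpha> \<le> cD" using pw1 cDp by (simp add: mult_left_le)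
      then have L: "cD * \<bar>u - 2/3\<bar> powr \<alpha> \<le> G \<sigma> (2/3) - G \<sigma> u" using lo by (simp add: cD_def)
      have "\<sigma> * (2/3 - u) \<le> 1 * 1"
        using h True sp mu_lt by (intro mult_mono) auto
      then have up: "G \<sigma> (2/3) - G \<sigma> u \<le> 1 + c0" using eq Fu by simp
      have "\<bar>u - 2/3\<bar> powr 1 \<le> \<bar>u - 2/3\<bar> powr \<alpha>" using d1 a1 by (intro powr_mono') auto
      moreover have "1/6 \<le> \<bar>u - 2/3\<bar>" using True by simp
      ultimately have "1/6 \<le> \<bar>u - 2/3\<bar> powr \<alpha>" by simp
      moreover have "0 \<le> 1 + c0" using c0_gt by simp
      ultimately have "(1 + c0) * 1 \<le> (1 + c0) * (6 * \<bar>u - 2/3\<bar> powr \<alpha>)"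
        by (intro mult_left_mono) auto
      then have "1 + c0 \<le> KD * \<bar>u - 2/3\<bar> powr \<alpha>" by (simp add: KD_def algebra_simps)
      then show ?thesis using L up by simp
    next
      case False
      define \<tau> where "\<tau> = mu * (1 - \<sigma>)"
      define w where "w = 2 - 2 * u"
      have u: "1/2 \<le> u" "u \<le> 1" using False h by auto
      have r1: "G (mu * (\<sigma> - 1)) (2 * u - 1) = G \<tau> w - \<tau>"
      proof -
        have "mu * (\<sigma> - 1) = - \<tau>" "2 * u - 1 = 1 - w" by (simp_all add: \<tau>_def w_def algebra_simps)
        then show ?thesis using G_refl[of \<tau> w] by simp
      qed
      have r2: "G (mu * (\<sigma> - 1)) (2 * (2/3) - 1) = G \<tau> (2/3) - \<tau>"
      proof -
        have "mu * (\<sigma> - 1) = - \<tau>" "2 * (2/3) - 1 = 1 - (2/3::real)" by (simp_all add: \<tau>_def algebra_simps)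
        then show ?thesis using G_refl[of \<tau> "2/3"] by simp
      qed
      have e1: "G \<sigma> u = (\<sigma> + 1) / 2 + lam * (G \<tau> w - \<tau>)"
        using G_right[OF u, of \<sigma>] r1 by simp
      have e2: "G \<sigma> (2/3) = (\<sigma> + 1) / 2 + lam * (G \<tau> (2/3) - \<tau>)"
        using G_right[of "2/3" \<sigma>] r2 by simp
      have diff: "G \<sigma> (2/3) - G \<sigma> u = lam * (G \<tau> (2/3) - G \<tau> w)" using e1 e2 by (simp add: algebra_simps)
      have t1: "mu * (1 - mu) \<le> \<tau>" unfolding \<tau>_def using h mu_pos by (intro mult_left_mono) auto
      have "0 \<le> mu * \<sigma>" using sp mu_pos by simp
      then have t2: "\<tau> \<le> mu" unfolding \<tau>_def by (simp add: right_diff_distrib)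
      have wa: "\<bar>w - 2/3\<bar> = 2 * \<bar>u - 2/3\<bar>" by (simp add: w_def abs_if)
      have wk: "1 / 2 ^ k \<le> \<bar>w - 2/3\<bar>" using h wa by simp
      have w01: "0 \<le> w" "w \<le> 1" using u by (auto simp: w_def)
      from Suc.IH[rule_format, of \<tau> w] t1 t2 w01 wk
      have IH: "cD * \<bar>w - 2/3\<bar> powr \<alpha> \<le> G \<tau> (2/3) - G \<tau> w" "G \<tau> (2/3) - G \<tau> w \<le> KD * \<bar>w - 2/3\<bar> powr \<alpha>"
        by auto
      have pw: "\<bar>w - 2/3\<bar> powr \<alpha> = 2 powr \<alpha> * \<bar>u - 2/3\<bar> powr \<alpha>" unfolding wa by (simp add: powr_mult)
      have "lam * (cD * \<bar>w - 2/3\<bar> powr \<alpha>) \<le> lam * (G \<tau> (2/3) - G \<tau> w)"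
        using IH(1) lam_pos by (intro mult_left_mono) auto
      moreover have "lam * (cD * \<bar>w - 2/3\<bar> powr \<alpha>) = cD * \<bar>u - 2/3\<bar> powr \<alpha>"
        unfolding pw using lam_2powr by (simp add: mult_ac)
      moreover have "lam * (G \<tau> (2/3) - G \<tau> w) \<le> lam * (KD * \<bar>w - 2/3\<bar> powr \<alpha>)"
        using IH(2) lam_pos by (intro mult_left_mono) auto
      moreover have "lam * (KD * \<bar>w - 2/3\<bar> powr \<alpha>) = KD * \<bar>u - 2/3\<bar> powr \<alpha>"
        unfolding pw using lam_2powr by (simp add: mult_ac)
      ultimately show ?thesis using diff by simp
    qed
  qed
qed

lemma decay23:
  assumes "mu * (1 - mu) \<le> \<sigma>" "\<sigma> \<le> mu" "0 \<le> u" "u \<le> 1"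
  shows "cD * \<bar>u - 2/3\<bar> powr \<alpha> \<le> G \<sigma> (2/3) - G \<sigma> u \<and> G \<sigma> (2/3) - G \<sigma> u \<le> KD * \<bar>u - 2/3\<bar> powr \<alpha>"
proof (cases "u = 2/3")
  case True
  have "\<bar>u - 2/3\<bar> = 0" by (simp only: True diff_self abs_zero)
  moreover have "G \<sigma> (2/3) - G \<sigma> u = 0" by (simp only: True diff_self)
  ultimately
  show ?thesis by (simp only:) simp
next
  case False
  then have d: "0 < \<bar>u - 2/3\<bar>" by simp
  obtain k where "(1/2::real) ^ k < \<bar>u - 2/3\<bar>" using real_arch_pow_inv[OF d] by force
  then have "1 / 2 ^ k \<le> \<bar>u - 2/3\<bar>" by (simp add: power_one_over)
  then show ?thesis using decay23_aux[of k] assms by blast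
qed

lemma decay_ys:
  assumes "Reg \<sigma>" "0 \<le> v" "v \<le> 1"
  shows "cD * \<bar>v - ys \<sigma>\<bar> powr \<alpha> \<le> G \<sigma> (ys \<sigma>) - G \<sigma> v \<and> G \<sigma> (ys \<sigma>) - G \<sigma> v \<le> KD * \<bar>v - ys \<sigma>\<bar> powr \<alpha>"
proof -
  have mm: "0 < mu * (1 - mu)" using mu_pos mu_lt by simp
  show ?thesis
  proof (cases "\<sigma> > 0")
    case True
    then show ?thesis using decay23[of \<sigma> v] assms by (simp add: Reg_def ys_def)
  next
    case False
    then have r: "mu * (1 - mu) \<le> - \<sigma>" "- \<sigma> \<le> mu" using assms(1) by (auto simp: Reg_def)
    have y: "ys \<sigma> = 1/3" using False by (simp add: ys_def)
    have "G \<sigma> (1/3) - G \<sigma> v = G (- \<sigma>) (2/3) - G (- \<sigma>) (1 - v)"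
      using G_refl[of \<sigma> v] G_refl[of \<sigma> "1/3"] by simp
    moreover have "\<bar>(1 - v) - 2/3\<bar> = \<bar>v - 1/3\<bar>" by (simp add: abs_if)
    ultimately show ?thesis unfolding y using decay23[of "- \<sigma>" "1 - v"] r assms by simp
  qed
qed

end


context alph begin

lemma chain: "0 \<le> x \<Longrightarrow> x \<le> 1 \<Longrightarrow>
  \<exists>a \<sigma> A. Rep F n a \<sigma> A \<and> a \<le> x \<and> x \<le> a + 1 / 2 ^ n \<and> 0 \<le> a \<and> a + 1 / 2 ^ n \<le> 1"
proof (induction n)
  case 0
  have "Rep F 0 0 0 0" unfolding Rep_def by (simp add: G_def)
  then show ?case using 0 by force
next
  case (Suc n)
  then obtain a \<sigma> A where h: "Rep F n a \<sigma> A" "a \<le> x" "x \<le> a + 1 / 2 ^ n" "0 \<le> a" "a + 1 / 2 ^ n \<le> 1"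
    by blast
  have h0: "0 \<le> 1 / (2::real) ^ Suc n" by simp
  have h1: "1 / (2::real) ^ Suc n + 1 / 2 ^ Suc n = 1 / 2 ^ n" by simp
  show ?case
  proof (cases "x \<le> a + 1 / 2 ^ Suc n")
    case True
    have "a + 1 / 2 ^ Suc n \<le> 1" using h h0 h1 by linarith
    then have "Rep F (Suc n) a (mu * (\<sigma> + 1)) A \<and> a \<le> x \<and> x \<le> a + 1 / 2 ^ Suc n \<and> 0 \<le> a \<and> a + 1 / 2 ^ Suc n \<le> 1"
      using Rep_left[OF h(1)] h True by simp
    then show ?thesis by blast
  next
    case False
    have "a + 1 / 2 ^ Suc n \<le> x" "x \<le> a + 1 / 2 ^ Suc n + 1 / 2 ^ Suc n" "0 \<le> a + 1 / 2 ^ Suc n"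
      "a + 1 / 2 ^ Suc n + 1 / 2 ^ Suc n \<le> 1" using h h0 h1 False by linarith+
    then have "Rep F (Suc n) (a + 1 / 2 ^ Suc n) (mu * (\<sigma> - 1)) (A + lam ^ n * ((\<sigma> + 1) / 2)) \<and>
        a + 1 / 2 ^ Suc n \<le> x \<and> x \<le> a + 1 / 2 ^ Suc n + 1 / 2 ^ Suc n \<and> 0 \<le> a + 1 / 2 ^ Suc n \<and>
        a + 1 / 2 ^ Suc n + 1 / 2 ^ Suc n \<le> 1"
      using Rep_right[OF h(1)] by simp
    then show ?thesis by blast
  qed
qed

lemma lam_pow_powr: "lam ^ n * (2 ^ n) powr \<alpha> = 1"
proof -
  have "(2::real) ^ n = 2 powr real n" by (simp add: powr_realpow)
  then have "(2 ^ n) powr \<alpha> = (2 powr \<alpha>) ^ n"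
    by (simp add: powr_powr powr_realpow[symmetric] mult.commute)
  then have "lam ^ n * (2 ^ n) powr \<alpha> = (lam * 2 powr \<alpha>) ^ n" by (simp add: power_mult_distrib)
  then show ?thesis using lam_2powr by simp
qed

lemma locmax_decay:
  assumes x: "0 \<le> x" "x \<le> 1" and d: "\<delta> > 0"
    and lm: "\<forall>t. 0 \<le> t \<and> t \<le> 1 \<and> \<bar>t - x\<bar> < \<delta> \<longrightarrow> F t \<le> F x"
  shows "\<exists>\<delta>1>0. \<forall>t. \<bar>t - x\<bar> \<le> \<delta>1 \<longrightarrow> 0 \<le> t \<and> t \<le> 1 \<and>
           cD * \<bar>t - x\<bar> powr \<alpha> \<le> F x - F t \<and> F x - F t \<le> KD * \<bar>t - x\<bar> powr \<alpha>"
proof -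
  obtain n where n: "(1/2::real) ^ n < \<delta>" using real_arch_pow_inv[OF d, of "1/2"] by auto
  obtain a \<sigma> A where h: "Rep F n a \<sigma> A" "a \<le> x" "x \<le> a + 1 / 2 ^ n" "0 \<le> a" "a + 1 / 2 ^ n \<le> 1"
    using chain[OF x] by blast
  have "State F x n a \<sigma> A"
    unfolding State_def
  proof (intro conjI h allI impI)
    fix t assume t: "a \<le> t \<and> t \<le> a + 1 / 2 ^ n"
    have "\<bar>t - x\<bar> \<le> 1 / 2 ^ n" using t h by auto
    then have "\<bar>t - x\<bar> < \<delta>" using n by (simp add: power_one_over)
    then show "F t \<le> F x" using lm t h by auto
  qed
  then obtain n' a' \<sigma>' A' where S: "State F x n' a' \<sigma>' A'" "Reg \<sigma>'" using stage2 by blast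
  have ys: "2 ^ n' * (x - a') = ys \<sigma>'" using stage3[OF S] .
  have p: "(0::real) < 2 ^ n'" by simp
  from S(1) have R: "Rep F n' a' \<sigma>' A'" and ab: "0 \<le> a'" "a' + 1 / 2 ^ n' \<le> 1"
    unfolding State_def by auto
  have ysr: "1/3 \<le> ys \<sigma>'" "ys \<sigma>' \<le> 2/3" by (auto simp: ys_def)
  define \<delta>1 :: real where "\<delta>1 = 1 / (3 * 2 ^ n')"
  have "\<delta>1 > 0" by (simp add: \<delta>1_def)
  moreover have "\<forall>t. \<bar>t - x\<bar> \<le> \<delta>1 \<longrightarrow> 0 \<le> t \<and> t \<le> 1 \<and>
           cD * \<bar>t - x\<bar> powr \<alpha> \<le> F x - F t \<and> F x - F t \<le> KD * \<bar>t - x\<bar> powr \<alpha>"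
  proof (intro allI impI)
    fix t assume t: "\<bar>t - x\<bar> \<le> \<delta>1"
    define v where "v = 2 ^ n' * (t - a')"
    have vx: "v - ys \<sigma>' = 2 ^ n' * (t - x)" using ys by (simp add: v_def algebra_simps)
    have "2 ^ n' * \<bar>t - x\<bar> \<le> 2 ^ n' * \<delta>1" using t p by (intro mult_left_mono) auto
    moreover have "2 ^ n' * \<delta>1 = 1/3" by (simp add: \<delta>1_def)
    moreover have "\<bar>v - ys \<sigma>'\<bar> = 2 ^ n' * \<bar>t - x\<bar>" unfolding vx by (simp add: abs_mult)
    ultimately have vy: "\<bar>v - ys \<sigma>'\<bar> \<le> 1/3" by simp
    have v01: "0 \<le> v" "v \<le> 1" using ysr abs_le_D1[OF vy] abs_le_D2[OF vy] by linarith+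
    have ta: "a' \<le> t" "t \<le> a' + 1 / 2 ^ n'"
    proof -
      have "0 \<le> 2 ^ n' * (t - a')" using v01 by (simp add: v_def)
      then show "a' \<le> t" using p by (simp add: zero_le_mult_iff)
      have "2 ^ n' * (t - a') \<le> 2 ^ n' * (1 / 2 ^ n')" using v01 by (simp add: v_def)
      then show "t \<le> a' + 1 / 2 ^ n'" using p by (simp add: field_simps)
    qed
    have Ft: "F t = A' + lam ^ n' * G \<sigma>' v" using R ta unfolding Rep_def v_def by blast
    have Fx: "F x = A' + lam ^ n' * G \<sigma>' (ys \<sigma>')"
      using R S(1) ys unfolding Rep_def State_def by auto
    have dif: "F x - F t = lam ^ n' * (G \<sigma>' (ys \<sigma>') - G \<sigma>' v)" using Ft Fx by (simp add: algebra_simps)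
    have pw: "lam ^ n' * \<bar>v - ys \<sigma>'\<bar> powr \<alpha> = \<bar>t - x\<bar> powr \<alpha>"
    proof -
      have "\<bar>v - ys \<sigma>'\<bar> powr \<alpha> = (2 ^ n') powr \<alpha> * \<bar>t - x\<bar> powr \<alpha>"
        unfolding vx by (simp add: abs_mult powr_mult)
      then show ?thesis using lam_pow_powr[of n'] by (simp add: mult.assoc[symmetric])
    qed
    note D = decay_ys[OF S(2) v01]
    have lp: "0 < lam ^ n'" using lam_pos by simp
    have "lam ^ n' * (cD * \<bar>v - ys \<sigma>'\<bar> powr \<alpha>) \<le> lam ^ n' * (G \<sigma>' (ys \<sigma>') - G \<sigma>' v)"
      using D lp by (intro mult_left_mono) auto
    moreover have "lam ^ n' * (G \<sigma>' (ys \<sigma>') - G \<sigma>' v) \<le> lam ^ n' * (KD * \<bar>v - ys \<sigma>'\<bar> powr \<alpha>)"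
      using D lp by (intro mult_left_mono) auto
    moreover have "lam ^ n' * (cD * \<bar>v - ys \<sigma>'\<bar> powr \<alpha>) = cD * \<bar>t - x\<bar> powr \<alpha>"
      using pw by (simp add: mult_ac)
    moreover have "lam ^ n' * (KD * \<bar>v - ys \<sigma>'\<bar> powr \<alpha>) = KD * \<bar>t - x\<bar> powr \<alpha>"
      using pw by (simp add: mult_ac)
    moreover have "0 \<le> t" "t \<le> 1" using ta ab by auto
    ultimately show "0 \<le> t \<and> t \<le> 1 \<and> cD * \<bar>t - x\<bar> powr \<alpha> \<le> F x - F t \<and> F x - F t \<le> KD * \<bar>t - x\<bar> powr \<alpha>"
      using dif by simp
  qed
  ultimately show ?thesis by blast
qed

lemma cD_pos: "0 < cD" using mu_pos mu_lt by (simp add: cD_def)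
lemma KD_pos: "0 < KD" using c0_gt by (simp add: KD_def)

end


lemma meas_box:
  assumes "a \<le> c" "b \<le> d"
  shows "measure lebesgue (cbox (a::real, b::real) (c, d)) = (c - a) * (d - b)"
  using assms by (simp add: content_cbox_if Basis_prod_def cbox_Pair_eq_0)

lemma mem_cbox_pair: "((t::real), (y::real)) \<in> cbox (a, b) (c, d) \<longleftrightarrow> a \<le> t \<and> t \<le> c \<and> b \<le> y \<and> y \<le> d"
  by (simp add: cbox_Pair_eq)

lemma ball_pair_D:
  assumes "(t, y) \<in> ball ((x::real), (z::real)) r"
  shows "\<bar>t - x\<bar> < r" "\<bar>y - z\<bar> < r"
proof -
  have "dist (fst (x, z)) (fst (t, y)) \<le> dist (x, z) (t, y)" by (rule dist_fst_le)
  moreover have "dist (snd (x, z)) (snd (t, y)) \<le> dist (x, z) (t, y)" by (rule dist_snd_le)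
  ultimately show "\<bar>t - x\<bar> < r" "\<bar>y - z\<bar> < r" using assms by (auto simp: dist_real_def)
qed

lemma ball_pair_I:
  assumes "\<bar>t - x\<bar> \<le> r/2" "\<bar>y - z\<bar> \<le> r/2" "r > 0"
  shows "((t::real), (y::real)) \<in> ball ((x::real), (z::real)) r"
proof -
  have "dist (x, z) (t, y) = sqrt ((t - x)\<^sup>2 + (y - z)\<^sup>2)"
    by (simp add: dist_Pair_Pair dist_real_def power2_commute)
  also have "\<dots> \<le> sqrt ((r/2)\<^sup>2 + (r/2)\<^sup>2)"
    using assms by (intro real_sqrt_le_mono add_mono) (auto simp: abs_le_square_iff[symmetric])
  also have "\<dots> < r"
  proof -
    have "(r/2)\<^sup>2 + (r/2)\<^sup>2 < r\<^sup>2" using assms by (simp add: power2_eq_square field_simps)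
    then have "sqrt ((r/2)\<^sup>2 + (r/2)\<^sup>2) < sqrt (r\<^sup>2)" by (rule real_sqrt_less_mono)
    then show ?thesis using assms by simp
  qed
  finally show ?thesis by simp
qed

context alph begin

lemma Omega_closed: "closed (Omega \<alpha>)"
proof -
  have "Omega \<alpha> = {p. 0 \<le> fst p} \<inter> {p. fst p \<le> 1} \<inter> {p. 0 \<le> snd p} \<inter> {p. snd p \<le> F (fst p)}"
    by (auto simp: Omega_def)
  moreover have "continuous_on UNIV (\<lambda>p::real\<times>real. F (fst p))"
    using F_cont by (intro continuous_on_compose2[OF F_cont]) (auto intro: continuous_intros)
  ultimately show ?thesis
    by (auto intro!: closed_Int closed_Collect_le continuous_intros)
qed

lemma Omega_sets: "Omega \<alpha> \<in> sets lebesgue"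
  using Omega_closed by (simp add: borel_closed)

lemma Omega_ball_fm: "Omega \<alpha> \<inter> ball X r \<in> fmeasurable lebesgue"
  by (metis Int_commute Omega_sets fmeasurable_Int_fmeasurable lmeasurable_ball)

lemma cOmega_ball_fm: "- Omega \<alpha> \<inter> ball X r \<in> fmeasurable lebesgue"
proof -
  have "- Omega \<alpha> \<in> sets lebesgue" using Omega_closed by (simp add: borel_open open_Compl)
  then show ?thesis by (metis Int_commute fmeasurable_Int_fmeasurable lmeasurable_ball)
qed

end

locale lmx = alph +
  fixes x \<delta>1 :: real
  assumes d1: "\<delta>1 > 0"
    and dec: "\<And>t. \<bar>t - x\<bar> \<le> \<delta>1 \<Longrightarrow> 0 \<le> t \<and> t \<le> 1 \<and>
           cD * \<bar>t - x\<bar> powr \<alpha> \<le> F x - F t \<and> F x - F t \<le> KD * \<bar>t - x\<bar> powr \<alpha>"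
begin

lemma Fx_pos: "0 < F x"
proof -
  have "cD * \<bar>(x + \<delta>1) - x\<bar> powr \<alpha> \<le> F x - F (x + \<delta>1)" using dec[of "x + \<delta>1"] d1 by simp
  moreover have "0 < cD * \<bar>(x + \<delta>1) - x\<bar> powr \<alpha>" using cD_pos d1 by simp
  ultimately show ?thesis using F_nonneg[of "x + \<delta>1"] by linarith
qed

definition Cu where "Cu = 4 * (1 / cD) powr (1 / \<alpha>)"
definition Cl where "Cl = (1 / (4 * KD)) powr (1 / \<alpha>) / 2"

lemma up_ball:
  assumes r: "0 < r" "r \<le> \<delta>1"
  shows "measure lebesgue (Omega \<alpha> \<inter> ball (x, F x) r) \<le> Cu * r powr (1 / \<alpha> + 1)"
proof -
  define d where "d = (r / cD) powr (1 / \<alpha>)"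
  have sub: "Omega \<alpha> \<inter> ball (x, F x) r \<subseteq> cbox (x - d, F x - r) (x + d, F x + r)"
  proof
    fix p assume p: "p \<in> Omega \<alpha> \<inter> ball (x, F x) r"
    obtain t y where pe: "p = (t, y)" by force
    have tb: "\<bar>t - x\<bar> < r" "\<bar>y - F x\<bar> < r" using ball_pair_D p pe by auto
    have yF: "y \<le> F t" using p pe by (auto simp: Omega_def)
    have "cD * \<bar>t - x\<bar> powr \<alpha> \<le> F x - F t" using dec[of t] tb r by simp
    then have "cD * \<bar>t - x\<bar> powr \<alpha> < r" using yF tb by (simp add: abs_less_iff)
    then have "\<bar>t - x\<bar> powr \<alpha> < r / cD" using cD_pos by (simp add: field_simps)
    then have "(\<bar>t - x\<bar> powr \<alpha>) powr (1 / \<alpha>) \<le> (r / cD) powr (1 / \<alpha>)"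
      using a0 by (intro powr_mono2) auto
    then have "\<bar>t - x\<bar> \<le> d" using a0 by (simp add: d_def powr_powr)
    then show "p \<in> cbox (x - d, F x - r) (x + d, F x + r)"
      using tb pe by (simp add: mem_cbox_pair abs_le_iff abs_less_iff)
  qed
  have dpos: "0 \<le> d" by (simp add: d_def)
  have "measure lebesgue (Omega \<alpha> \<inter> ball (x, F x) r) \<le> measure lebesgue (cbox (x - d, F x - r) (x + d, F x + r))"
    using measure_mono_fmeasurable[OF sub fmeasurableD[OF Omega_ball_fm] lmeasurable_cbox] by simp
  also have "\<dots> = (2 * d) * (2 * r)" using dpos r by (subst meas_box) auto
  also have "\<dots> = Cu * r powr (1 / \<alpha> + 1)"
  proof -
    have "d = r powr (1 / \<alpha>) * (1 / cD) powr (1 / \<alpha>)"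
      unfolding d_def using r cD_pos by (simp add: powr_mult[symmetric] divide_inverse)
    moreover have "r powr (1 / \<alpha> + 1) = r powr (1 / \<alpha>) * r" using r by (simp add: powr_add)
    ultimately show ?thesis by (simp add: Cu_def)
  qed
  finally show ?thesis .
qed

lemma KD_ge1: "1 \<le> KD" using c0_gt by (simp add: KD_def)

lemma lo_ball:
  assumes r: "0 < r" "r \<le> min 1 (min \<delta>1 (F x))"
  shows "Cl * r powr (1 / \<alpha> + 1) \<le> measure lebesgue (Omega \<alpha> \<inter> ball (x, F x) r)"
proof -
  define d where "d = (r / (4 * KD)) powr (1 / \<alpha>)"
  have dpos: "0 \<le> d" by (simp add: d_def)
  have q01: "0 \<le> r / (4 * KD)" "r / (4 * KD) \<le> 1" using r KD_ge1 by (auto simp: field_simps)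
  have "d \<le> (r / (4 * KD)) powr 1" unfolding d_def using q01 a0 a1 by (intro powr_mono') (auto simp: field_simps)
  also have "\<dots> = r / (4 * KD)" using q01 r KD_ge1 by simp
  also have "\<dots> \<le> r / 4" using r KD_ge1 by (intro divide_left_mono) auto
  finally have d4: "d \<le> r / 4" .
  have dda: "d powr \<alpha> = r / (4 * KD)" unfolding d_def using a0 q01 r KD_ge1 by (simp add: powr_powr)
  have sub: "cbox (x - d, F x - r/2) (x + d, F x - r/4) \<subseteq> Omega \<alpha> \<inter> ball (x, F x) r"
  proof
    fix p assume p: "p \<in> cbox (x - d, F x - r/2) (x + d, F x - r/4)"
    obtain t y where pe: "p = (t, y)" by force
    have tb: "\<bar>t - x\<bar> \<le> d" "F x - r/2 \<le> y" "y \<le> F x - r/4" using p pe by (auto simp: mem_cbox_pair abs_le_iff)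
    have td: "\<bar>t - x\<bar> \<le> \<delta>1" using tb d4 r by simp
    have t01: "0 \<le> t" "t \<le> 1" using dec[OF td] by auto
    have "F x - F t \<le> KD * \<bar>t - x\<bar> powr \<alpha>" using dec[OF td] by auto
    also have "\<dots> \<le> KD * d powr \<alpha>" using KD_ge1 tb a0 by (intro mult_left_mono powr_mono2) auto
    also have "\<dots> = r / 4" using dda KD_ge1 by simp
    finally have yF: "y \<le> F t" using tb by simp
    have y0: "0 \<le> y" using tb r by simp
    have "p \<in> Omega \<alpha>" using pe t01 yF y0 by (simp add: Omega_def)
    moreover have "p \<in> ball (x, F x) r" unfolding pe using tb d4 r by (intro ball_pair_I) auto
    ultimately show "p \<in> Omega \<alpha> \<inter> ball (x, F x) r" by simp
  qed
  have "measure lebesgue (cbox (x - d, F x - r/2) (x + d, F x - r/4)) = (2 * d) * (r / 4)"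
    using dpos r by (subst meas_box) auto
  also have "\<dots> = Cl * r powr (1 / \<alpha> + 1)"
  proof -
    have "d = r powr (1 / \<alpha>) * (1 / (4 * KD)) powr (1 / \<alpha>)"
      unfolding d_def using powr_mult[of r "1 / (4 * KD)" "1 / \<alpha>"] r KD_ge1 by simp
    moreover have "r powr (1 / \<alpha> + 1) = r powr (1 / \<alpha>) * r" using r by (simp add: powr_add)
    moreover have g: "\<And>P Q::real. 2 * (P * Q) * (r / 4) = Q / 2 * (P * r)" by (simp add: field_simps)
    ultimately show ?thesis unfolding Cl_def by (simp only: g)
  qed
  finally have e: "measure lebesgue (cbox (x - d, F x - r/2) (x + d, F x - r/4)) = Cl * r powr (1 / \<alpha> + 1)" .
  have "measure lebesgue (cbox (x - d, F x - r/2) (x + d, F x - r/4)) \<le> measure lebesgue (Omega \<alpha> \<inter> ball (x, F x) r)"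
    using sub Omega_ball_fm by (intro measure_mono_fmeasurable) (auto simp: lmeasurable_cbox)
  then show ?thesis using e by simp
qed

lemma c_lo_ball:
  assumes r: "0 < r" "r \<le> \<delta>1"
  shows "r\<^sup>2 / 4 \<le> measure lebesgue (- Omega \<alpha> \<inter> ball (x, F x) r)"
proof -
  have sub: "cbox (x - r/2, F x + r/4) (x + r/2, F x + r/2) \<subseteq> - Omega \<alpha> \<inter> ball (x, F x) r"
  proof
    fix p assume p: "p \<in> cbox (x - r/2, F x + r/4) (x + r/2, F x + r/2)"
    obtain t y where pe: "p = (t, y)" by force
    have tb0: "x - r/2 \<le> t" "t \<le> x + r/2" "F x + r/4 \<le> y" "y \<le> F x + r/2" using p pe by (auto simp: mem_cbox_pair)
    have tb: "\<bar>t - x\<bar> \<le> r/2" "F x + r/4 \<le> y" "y \<le> F x + r/2" using tb0 by (intro abs_leI, linarith+)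
    have td: "\<bar>t - x\<bar> \<le> \<delta>1" using tb r by simp
    have "0 \<le> cD * \<bar>t - x\<bar> powr \<alpha>" using cD_pos by simp
    then have "F t \<le> F x" using dec[OF td] by linarith
    then have "y > F t" using tb r by simp
    then have "p \<notin> Omega \<alpha>" using pe by (auto simp: Omega_def)
    moreover have "p \<in> ball (x, F x) r" unfolding pe using tb r by (intro ball_pair_I) auto
    ultimately show "p \<in> - Omega \<alpha> \<inter> ball (x, F x) r" by simp
  qed
  have "measure lebesgue (cbox (x - r/2, F x + r/4) (x + r/2, F x + r/2)) = r * (r / 4)"
    using r by (subst meas_box) auto
  moreover have "measure lebesgue (cbox (x - r/2, F x + r/4) (x + r/2, F x + r/2)) \<le> measure lebesgue (- Omega \<alpha> \<inter> ball (x, F x) r)"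
    using sub cOmega_ball_fm by (intro measure_mono_fmeasurable) (auto simp: lmeasurable_cbox)
  ultimately show ?thesis by (simp add: power2_eq_square)
qed

lemma c_up_ball:
  assumes r: "0 < r"
  shows "measure lebesgue (- Omega \<alpha> \<inter> ball (x, F x) r) \<le> 4 * r\<^sup>2"
proof -
  have sub: "- Omega \<alpha> \<inter> ball (x, F x) r \<subseteq> cbox (x - r, F x - r) (x + r, F x + r)"
  proof
    fix p assume p: "p \<in> - Omega \<alpha> \<inter> ball (x, F x) r"
    obtain t y where pe: "p = (t, y)" by force
    have tb: "\<bar>t - x\<bar> < r" "\<bar>y - F x\<bar> < r" using ball_pair_D p pe by auto
    then show "p \<in> cbox (x - r, F x - r) (x + r, F x + r)" using pe by (simp add: mem_cbox_pair abs_less_iff)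
  qed
  have "measure lebesgue (- Omega \<alpha> \<inter> ball (x, F x) r) \<le> measure lebesgue (cbox (x - r, F x - r) (x + r, F x + r))"
    using measure_mono_fmeasurable[OF sub fmeasurableD[OF cOmega_ball_fm] lmeasurable_cbox] by simp
  also have "\<dots> = (2 * r) * (2 * r)" using r by (subst meas_box) auto
  finally show ?thesis by (simp add: power2_eq_square)
qed

end


lemma powr_cmp:
  fixes a b c C r0 :: real
  assumes c: "0 < c" and r0: "0 < r0" and h: "\<forall>r. 0 < r \<and> r \<le> r0 \<longrightarrow> c * r powr a \<le> C * r powr b"
  shows "b \<le> a"
proof (rule ccontr)
  assume "\<not> b \<le> a"
  define e where "e = b - a"
  have e: "0 < e" using \<open>\<not> b \<le> a\<close> by (simp add: e_def)
  have "c * r0 powr a \<le> C * r0 powr b" using h r0 by auto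
  moreover have "0 < c * r0 powr a" using c r0 by simp
  ultimately have "0 < C * r0 powr b" by linarith
  then have Cp: "0 < C" using r0 by (simp add: zero_less_mult_iff)
  define r where "r = min r0 ((c / (2 * C)) powr (1 / e))"
  have rp: "0 < r" using r0 c Cp by (simp add: r_def)
  have rr0: "r \<le> r0" by (simp add: r_def)
  have "r powr e \<le> ((c / (2 * C)) powr (1 / e)) powr e"
    using rp e by (intro powr_mono2) (auto simp: r_def)
  also have "\<dots> = c / (2 * C)" using e c Cp by (simp add: powr_powr)
  finally have re: "r powr e \<le> c / (2 * C)" .
  have "c * r powr a \<le> C * r powr b" using h rp rr0 by auto
  also have "r powr b = r powr a * r powr e" by (simp add: e_def powr_add[symmetric])
  finally have "c * r powr a \<le> (C * r powr e) * r powr a" by (simp add: mult_ac)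
  then have "c \<le> C * r powr e" using rp by simp
  also have "\<dots> \<le> C * (c / (2 * C))" using re Cp by (intro mult_left_mono) auto
  also have "\<dots> = c / 2" using Cp by simp
  finally show False using c by simp
qed

lemma Sup_exact: "e \<in> S \<Longrightarrow> (\<And>\<beta>. \<beta> \<in> S \<Longrightarrow> \<beta> \<le> e) \<Longrightarrow> Sup (ereal ` S) = ereal e"
  by (rule Sup_eqI) auto

lemma Inf_exact: "e \<in> S \<Longrightarrow> (\<And>\<beta>. \<beta> \<in> S \<Longrightarrow> e \<le> \<beta>) \<Longrightarrow> Inf (ereal ` S) = ereal e"
  by (rule Inf_eqI) auto

lemma powr2: "0 < (r::real) \<Longrightarrow> r powr 2 = r\<^sup>2"
  by (simp add: powr_realpow[of r 2, simplified])

context lmx begin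

definition r2 where "r2 = min 1 (min \<delta>1 (F x))"
lemma r2_pos: "0 < r2" using d1 Fx_pos by (simp add: r2_def)
lemma Cu_pos: "0 < Cu" using cD_pos by (simp add: Cu_def)
lemma Cl_pos: "0 < Cl" using KD_ge1 by (simp add: Cl_def)

lemma e2: "1 / \<alpha> - 1 + 2 = 1 / \<alpha> + 1" by simp

lemma Ew_Omega: "Ew (Omega \<alpha>) (x, F x) = ereal (1 / \<alpha> - 1)"
  unfolding Ew_def
proof (rule Sup_exact)
  show "1 / \<alpha> - 1 \<in> {\<beta>. \<exists>C r0. C > 0 \<and> r0 > 0 \<and>
      (\<forall>r. 0 < r \<and> r \<le> r0 \<longrightarrow> measure lebesgue (Omega \<alpha> \<inter> ball (x, F x) r) \<le> C * r powr (\<beta> + 2))}"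
  proof (rule CollectI, rule exI[of _ Cu], rule exI[of _ \<delta>1], intro conjI Cu_pos d1 allI impI)
    fix r :: real assume "0 < r \<and> r \<le> \<delta>1"
    then show "measure lebesgue (Omega \<alpha> \<inter> ball (x, F x) r) \<le> Cu * r powr (1 / \<alpha> - 1 + 2)"
      unfolding e2 using up_ball by blast
  qed
next
  fix \<beta> assume "\<beta> \<in> {\<beta>. \<exists>C r0. C > 0 \<and> r0 > 0 \<and>
      (\<forall>r. 0 < r \<and> r \<le> r0 \<longrightarrow> measure lebesgue (Omega \<alpha> \<inter> ball (x, F x) r) \<le> C * r powr (\<beta> + 2))}"
  then obtain C r0 where h: "C > 0" "r0 > 0"
    "\<forall>r. 0 < r \<and> r \<le> r0 \<longrightarrow> measure lebesgue (Omega \<alpha> \<inter> ball (x, F x) r) \<le> C * r powr (\<beta> + 2)" by blast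
  have "\<forall>r. 0 < r \<and> r \<le> min r0 r2 \<longrightarrow> Cl * r powr (1 / \<alpha> + 1) \<le> C * r powr (\<beta> + 2)"
  proof (intro allI impI)
    fix r :: real assume r: "0 < r \<and> r \<le> min r0 r2"
    then have "Cl * r powr (1 / \<alpha> + 1) \<le> measure lebesgue (Omega \<alpha> \<inter> ball (x, F x) r)"
      using lo_ball[of r] unfolding r2_def by simp
    also have "\<dots> \<le> C * r powr (\<beta> + 2)" using h(3) r by simp
    finally show "Cl * r powr (1 / \<alpha> + 1) \<le> C * r powr (\<beta> + 2)" .
  qed
  moreover have mp: "0 < min r0 r2" using h r2_pos by simp
  ultimately have "\<beta> + 2 \<le> 1 / \<alpha> + 1" using powr_cmp[OF Cl_pos mp] by blast
  then show "\<beta> \<le> 1 / \<alpha> - 1" by simp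
qed

lemma Es_Omega: "Es (Omega \<alpha>) (x, F x) = ereal (1 / \<alpha> - 1)"
  unfolding Es_def
proof (rule Inf_exact)
  show "1 / \<alpha> - 1 \<in> {\<beta>. \<exists>C r0. C > 0 \<and> r0 > 0 \<and>
      (\<forall>r. 0 < r \<and> r \<le> r0 \<longrightarrow> measure lebesgue (Omega \<alpha> \<inter> ball (x, F x) r) \<ge> C * r powr (\<beta> + 2))}"
  proof (rule CollectI, rule exI[of _ Cl], rule exI[of _ r2], intro conjI Cl_pos r2_pos allI impI)
    fix r :: real assume "0 < r \<and> r \<le> r2"
    then show "measure lebesgue (Omega \<alpha> \<inter> ball (x, F x) r) \<ge> Cl * r powr (1 / \<alpha> - 1 + 2)"
      unfolding e2 using lo_ball[of r] unfolding r2_def by simp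
  qed
next
  fix \<beta> assume "\<beta> \<in> {\<beta>. \<exists>C r0. C > 0 \<and> r0 > 0 \<and>
      (\<forall>r. 0 < r \<and> r \<le> r0 \<longrightarrow> measure lebesgue (Omega \<alpha> \<inter> ball (x, F x) r) \<ge> C * r powr (\<beta> + 2))}"
  then obtain C r0 where h: "C > 0" "r0 > 0"
    "\<forall>r. 0 < r \<and> r \<le> r0 \<longrightarrow> measure lebesgue (Omega \<alpha> \<inter> ball (x, F x) r) \<ge> C * r powr (\<beta> + 2)" by blast
  have "\<forall>r. 0 < r \<and> r \<le> min r0 \<delta>1 \<longrightarrow> C * r powr (\<beta> + 2) \<le> Cu * r powr (1 / \<alpha> + 1)"
  proof (intro allI impI)
    fix r :: real assume r: "0 < r \<and> r \<le> min r0 \<delta>1"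
    then have "C * r powr (\<beta> + 2) \<le> measure lebesgue (Omega \<alpha> \<inter> ball (x, F x) r)" using h(3) by simp
    also have "\<dots> \<le> Cu * r powr (1 / \<alpha> + 1)" using up_ball[of r] r by simp
    finally show "C * r powr (\<beta> + 2) \<le> Cu * r powr (1 / \<alpha> + 1)" .
  qed
  moreover have mp: "0 < min r0 \<delta>1" using h d1 by simp
  ultimately have "1 / \<alpha> + 1 \<le> \<beta> + 2" using powr_cmp[OF h(1) mp] by blast
  then show "1 / \<alpha> - 1 \<le> \<beta>" by simp
qed

lemma Ew_cOmega: "Ew (- Omega \<alpha>) (x, F x) = 0"
proof -
  have "Ew (- Omega \<alpha>) (x, F x) = ereal 0"
    unfolding Ew_def
  proof (rule Sup_exact)
    have "\<forall>r. 0 < r \<and> r \<le> 1 \<longrightarrow> measure lebesgue (- Omega \<alpha> \<inter> ball (x, F x) r) \<le> 4 * r powr (0 + 2)"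
      using c_up_ball by (simp add: powr2)
    then show "0 \<in> {\<beta>. \<exists>C r0. C > 0 \<and> r0 > 0 \<and>
      (\<forall>r. 0 < r \<and> r \<le> r0 \<longrightarrow> measure lebesgue (- Omega \<alpha> \<inter> ball (x, F x) r) \<le> C * r powr (\<beta> + 2))}"
      by (intro CollectI exI[of _ 4] exI[of _ 1]) auto
  next
    fix \<beta> assume "\<beta> \<in> {\<beta>. \<exists>C r0. C > 0 \<and> r0 > 0 \<and>
        (\<forall>r. 0 < r \<and> r \<le> r0 \<longrightarrow> measure lebesgue (- Omega \<alpha> \<inter> ball (x, F x) r) \<le> C * r powr (\<beta> + 2))}"
    then obtain C r0 where h: "C > 0" "r0 > 0"
      "\<forall>r. 0 < r \<and> r \<le> r0 \<longrightarrow> measure lebesgue (- Omega \<alpha> \<inter> ball (x, F x) r) \<le> C * r powr (\<beta> + 2)" by blast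
    have "\<forall>r. 0 < r \<and> r \<le> min r0 \<delta>1 \<longrightarrow> (1/4) * r powr 2 \<le> C * r powr (\<beta> + 2)"
    proof (intro allI impI)
      fix r :: real assume r: "0 < r \<and> r \<le> min r0 \<delta>1"
      have "r\<^sup>2 / 4 \<le> measure lebesgue (- Omega \<alpha> \<inter> ball (x, F x) r)" using c_lo_ball r by simp
      also have "\<dots> \<le> C * r powr (\<beta> + 2)" using h r by simp
      finally show "(1/4) * r powr 2 \<le> C * r powr (\<beta> + 2)" using r by (simp add: powr2)
    qed
    moreover have mp: "0 < min r0 \<delta>1" using h d1 by simp
    moreover have "(0::real) < 1/4" by simp
    ultimately have "\<beta> + 2 \<le> 2" using powr_cmp[of "1/4" "min r0 \<delta>1"] by blast
    then show "\<beta> \<le> 0" by simp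
  qed
  then show ?thesis by (simp add: zero_ereal_def)
qed

lemma Es_cOmega: "Es (- Omega \<alpha>) (x, F x) = 0"
proof -
  have "Es (- Omega \<alpha>) (x, F x) = ereal 0"
    unfolding Es_def
  proof (rule Inf_exact)
    have "\<forall>r. 0 < r \<and> r \<le> \<delta>1 \<longrightarrow> measure lebesgue (- Omega \<alpha> \<inter> ball (x, F x) r) \<ge> (1/4) * r powr (0 + 2)"
      using c_lo_ball by (simp add: powr2)
    then show "0 \<in> {\<beta>. \<exists>C r0. C > 0 \<and> r0 > 0 \<and>
      (\<forall>r. 0 < r \<and> r \<le> r0 \<longrightarrow> measure lebesgue (- Omega \<alpha> \<inter> ball (x, F x) r) \<ge> C * r powr (\<beta> + 2))}"
      using d1 by (intro CollectI exI[of _ "1/4"] exI[of _ \<delta>1]) auto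
  next
    fix \<beta> assume "\<beta> \<in> {\<beta>. \<exists>C r0. C > 0 \<and> r0 > 0 \<and>
        (\<forall>r. 0 < r \<and> r \<le> r0 \<longrightarrow> measure lebesgue (- Omega \<alpha> \<inter> ball (x, F x) r) \<ge> C * r powr (\<beta> + 2))}"
    then obtain C r0 where h: "C > 0" "r0 > 0"
      "\<forall>r. 0 < r \<and> r \<le> r0 \<longrightarrow> measure lebesgue (- Omega \<alpha> \<inter> ball (x, F x) r) \<ge> C * r powr (\<beta> + 2)" by blast
    have "\<forall>r. 0 < r \<and> r \<le> r0 \<longrightarrow> C * r powr (\<beta> + 2) \<le> 4 * r powr 2"
    proof (intro allI impI)
      fix r :: real assume r: "0 < r \<and> r \<le> r0"
      then have "C * r powr (\<beta> + 2) \<le> measure lebesgue (- Omega \<alpha> \<inter> ball (x, F x) r)" using h(3) by simp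
      also have "\<dots> \<le> 4 * r\<^sup>2" using c_up_ball[of r] r by simp
      finally show "C * r powr (\<beta> + 2) \<le> 4 * r powr 2" using r by (simp add: powr2)
    qed
    then have "2 \<le> \<beta> + 2" using powr_cmp[OF h(1) h(2)] by blast
    then show "0 \<le> \<beta>" by simp
  qed
  then show ?thesis by (simp add: zero_ereal_def)
qed

end


lemma poly2_cont: "poly2_deg_le u P \<Longrightarrow> continuous_on UNIV P"
proof -
  assume "poly2_deg_le u P"
  then obtain c :: "nat \<Rightarrow> nat \<Rightarrow> real" where
    P: "P = (\<lambda>(x, y). \<Sum>(i, j) \<in> {(i, j). real (i + j) \<le> u}. c i j * x ^ i * y ^ j)"
    unfolding poly2_deg_le_def by blast
  define S where "S = {(i, j). real (i + j) \<le> u}"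
  have "P = (\<lambda>z. \<Sum>ij\<in>S. (\<lambda>ij z. case ij of (i, j) \<Rightarrow> c i j * fst z ^ i * snd z ^ j) ij z)"
    unfolding P S_def by (auto simp: fun_eq_iff split_def)
  moreover have "continuous_on UNIV (\<lambda>z. \<Sum>ij\<in>S. (\<lambda>ij z. case ij of (i, j) \<Rightarrow> c i j * fst z ^ i * snd z ^ j) ij z)"
  proof (rule continuous_on_sum)
    fix ij :: "nat \<times> nat"
    obtain i j where "ij = (i, j)" by force
    then show "continuous_on UNIV ((\<lambda>ij z. case ij of (i, j) \<Rightarrow> c i j * fst z ^ i * snd z ^ j) ij)"
      by (auto intro!: continuous_intros)
  qed
  ultimately show ?thesis by simp
qed

lemma poly2_zero: "poly2_deg_le u (\<lambda>_. 0)"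
  unfolding poly2_deg_le_def by (rule exI[of _ "\<lambda>i j. 0"]) (auto simp: fun_eq_iff)

lemma esssup_lower:
  assumes A: "A \<in> sets M" "emeasure M A > 0" "\<And>z. z \<in> A \<Longrightarrow> c \<le> g z"
  shows "c \<le> esssup M g"
proof (rule ccontr)
  assume "\<not> c \<le> esssup M g"
  then have lt: "esssup M g < c" by simp
  have imp: "g z \<le> esssup M g \<longrightarrow> z \<notin> A" for z
  proof (intro impI notI)
    assume "g z \<le> esssup M g" "z \<in> A"
    then have "c \<le> esssup M g" using A(3) order_trans by blast
    then show False using lt by simp
  qed
  have "AE z in M. z \<notin> A"
    using esssup_AE[of g M] by (rule AE_mp) (intro AE_I2 imp)
  moreover have e: "{z \<in> space M. \<not> z \<notin> A} = A" using sets.sets_into_space[OF A(1)] by auto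
  have iff: "(AE z in M. z \<notin> A) \<longleftrightarrow> emeasure M A = 0" by (rule AE_iff_measurable[OF A(1) e])
  ultimately have "emeasure M A = 0" using iff by (simp only:)
  then show False using A(2) by simp
qed

lemma ind_powr: "0 < p \<Longrightarrow> \<bar>indicator S z - 0\<bar> powr p = (indicator S z :: real)"
  by (cases "z \<in> S") auto

context lmx begin

abbreviation ind where "ind \<equiv> (indicator (Omega \<alpha>) :: real \<times> real \<Rightarrow> real)"

lemma ind_meas: "ind \<in> borel_measurable lebesgue"
  by (rule borel_measurable_indicator[OF Omega_sets])

lemma int_eq:
  assumes "0 < p" "K \<in> sets lebesgue"
  shows "(\<integral>\<^sup>+ X. ennreal (\<bar>ind X - 0\<bar> powr p) * indicator K X \<partial>lebesgue) = emeasure lebesgue (Omega \<alpha> \<inter> K)"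
proof -
  have "(\<lambda>X. ennreal (\<bar>ind X - 0\<bar> powr p) * indicator K X) = indicator (Omega \<alpha> \<inter> K)"
    using assms(1) by (auto simp: fun_eq_iff indicator_def)
  then show ?thesis using assms Omega_sets by (simp add: nn_integral_indicator)
qed

lemma Lp_loc_ind: "1 \<le> p \<Longrightarrow> Lp_loc p ind"
  unfolding Lp_loc_def
proof (intro conjI ind_meas allI impI)
  fix K :: "(real \<times> real) set" assume p: "1 \<le> p" and K: "compact K"
  have Kf: "K \<in> lmeasurable" using K by (rule lmeasurable_compact)
  have Ks: "K \<in> sets lebesgue" using Kf by (rule fmeasurableD)
  have "(\<integral>\<^sup>+ X. ennreal (\<bar>ind X\<bar> powr p) * indicator K X \<partial>lebesgue) = emeasure lebesgue (Omega \<alpha> \<inter> K)"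
    using int_eq[of p K] p Ks by simp
  also have "\<dots> \<le> emeasure lebesgue K" using Ks by (intro emeasure_mono) auto
  also have "\<dots> < \<infinity>" unfolding infinity_ennreal_def using fmeasurableD2[OF Kf] by (simp only: top.not_eq_extremum)
  finally show "(\<integral>\<^sup>+ X. ennreal (\<bar>ind X\<bar> powr p) * indicator K X \<partial>lebesgue) < \<infinity>" .
qed

lemma esssup_ind_le1: "esssup (restrict_space lebesgue K) (\<lambda>X. ereal \<bar>ind X - 0\<bar>) \<le> 1"
proof (rule esssup_I)
  show "(\<lambda>X. ereal \<bar>ind X - 0\<bar>) \<in> borel_measurable (restrict_space lebesgue K)"
    using ind_meas by (intro measurable_restrict_space1 borel_measurable_ereal borel_measurable_abs) simp
  show "AE X in restrict_space lebesgue K. ereal \<bar>ind X - 0\<bar> \<le> 1"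
    by (intro AE_I2) (simp add: indicator_def)
qed

lemma Linf_loc_ind: "Linf_loc ind"
  unfolding Linf_loc_def
proof (intro conjI ind_meas allI impI)
  fix K :: "(real \<times> real) set"
  show "esssup (restrict_space lebesgue K) (\<lambda>X. ereal \<bar>ind X\<bar>) < \<infinity>"
  proof -
    have "esssup (restrict_space lebesgue K) (\<lambda>X. ereal \<bar>ind X\<bar>) \<le> 1" using esssup_ind_le1[of K] by simp
    moreover have "(1::ereal) < \<infinity>" by simp
    ultimately show ?thesis by (rule le_less_trans)
  qed
qed

end


context lmx begin

lemma low_sets:
  assumes Pc: "continuous_on UNIV P"
  shows "\<exists>\<rho>1>0. \<forall>\<rho>. 0 < \<rho> \<and> \<rho> \<le> \<rho>1 \<longrightarrow> (\<exists>A. A \<in> sets lebesgue \<and> A \<subseteq> cball (x, F x) \<rho> \<and>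
     emeasure lebesgue A < \<infinity> \<and> min (1/4) Cl * \<rho> powr (1 / \<alpha> + 1) \<le> measure lebesgue A \<and>
     (\<forall>Z\<in>A. 1/4 \<le> \<bar>ind Z - P Z\<bar>))"
proof -
  have "\<forall>e>0. \<exists>d>0. \<forall>Z\<in>UNIV. dist Z (x, F x) < d \<longrightarrow> dist (P Z) (P (x, F x)) < e"
    using Pc unfolding continuous_on_iff by blast
  then obtain \<eta> where \<eta>: "\<eta> > 0" "\<And>Z. dist Z (x, F x) < \<eta> \<Longrightarrow> dist (P Z) (P (x, F x)) < 1/4"
    by (metis UNIV_I divide_pos_pos zero_less_numeral zero_less_one)
  define \<rho>1 where "\<rho>1 = min (\<eta> / 2) r2"
  have \<rho>1p: "0 < \<rho>1" using \<eta> r2_pos by (simp add: \<rho>1_def)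
  have "\<forall>\<rho>. 0 < \<rho> \<and> \<rho> \<le> \<rho>1 \<longrightarrow> (\<exists>A. A \<in> sets lebesgue \<and> A \<subseteq> cball (x, F x) \<rho> \<and>
     emeasure lebesgue A < \<infinity> \<and> min (1/4) Cl * \<rho> powr (1 / \<alpha> + 1) \<le> measure lebesgue A \<and>
     (\<forall>Z\<in>A. 1/4 \<le> \<bar>ind Z - P Z\<bar>))"
  proof (intro allI impI)
    fix \<rho> :: real assume \<rho>: "0 < \<rho> \<and> \<rho> \<le> \<rho>1"
    have \<rho>b: "\<rho> \<le> 1" "\<rho> \<le> \<delta>1" "\<rho> \<le> min 1 (min \<delta>1 (F x))" "\<rho> < \<eta>"
      using \<rho> \<eta> by (auto simp: \<rho>1_def r2_def)
    have near: "\<And>Z. Z \<in> ball (x, F x) \<rho> \<Longrightarrow> \<bar>P Z - P (x, F x)\<bar> < 1/4"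
    proof -
      fix Z assume "Z \<in> ball (x, F x) \<rho>"
      then have "dist Z (x, F x) < \<eta>" using \<rho>b by (simp add: dist_commute)
      then show "\<bar>P Z - P (x, F x)\<bar> < 1/4" using \<eta>(2) by (simp add: dist_real_def)
    qed
    have "\<rho> powr (1 / \<alpha> + 1) \<le> \<rho> powr 2"
    proof (rule powr_mono')
      have "1 \<le> 1 / \<alpha>" using a0 a1 by simp
      then show "2 \<le> 1 / \<alpha> + 1" by simp
    qed (use \<rho> \<rho>b in auto)
    then have pw: "\<rho> powr (1 / \<alpha> + 1) \<le> \<rho>\<^sup>2" using \<rho> by (simp add: powr2)
    have mn: "0 \<le> min (1/4) Cl" using Cl_pos by simp
    have pwn: "0 \<le> \<rho> powr (1 / \<alpha> + 1)" by simp
    show "\<exists>A. A \<in> sets lebesgue \<and> A \<subseteq> cball (x, F x) \<rho> \<and>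
     emeasure lebesgue A < \<infinity> \<and> min (1/4) Cl * \<rho> powr (1 / \<alpha> + 1) \<le> measure lebesgue A \<and>
     (\<forall>Z\<in>A. 1/4 \<le> \<bar>ind Z - P Z\<bar>)"
    proof (cases "1/2 \<le> \<bar>P (x, F x)\<bar>")
      case True
      define A where "A = - Omega \<alpha> \<inter> ball (x, F x) \<rho>"
      have A1: "A \<in> sets lebesgue" using cOmega_ball_fm by (simp add: A_def fmeasurableD)
      have A2: "A \<subseteq> cball (x, F x) \<rho>" using ball_subset_cball by (auto simp: A_def)
      have A3: "emeasure lebesgue A < \<infinity>" unfolding infinity_ennreal_def A_def
        using fmeasurableD2[OF cOmega_ball_fm] by (simp only: top.not_eq_extremum)
      have "min (1/4) Cl * \<rho> powr (1 / \<alpha> + 1) \<le> (1/4) * \<rho> powr (1 / \<alpha> + 1)"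
        using pwn by (intro mult_right_mono) auto
      also have "\<dots> \<le> \<rho>\<^sup>2 / 4" using pw by simp
      also have "\<dots> \<le> measure lebesgue A" unfolding A_def using c_lo_ball \<rho> \<rho>b by simp
      finally have A4: "min (1/4) Cl * \<rho> powr (1 / \<alpha> + 1) \<le> measure lebesgue A" .
      have A5: "\<forall>Z\<in>A. 1/4 \<le> \<bar>ind Z - P Z\<bar>"
      proof
        fix Z assume Z: "Z \<in> A"
        then have "ind Z = 0" by (simp add: A_def)
        moreover have "\<bar>P Z - P (x, F x)\<bar> < 1/4" using near Z by (simp add: A_def)
        ultimately show "1/4 \<le> \<bar>ind Z - P Z\<bar>" using True by linarith
      qed
      show ?thesis using A1 A2 A3 A4 A5 by blast
    next
      case False
      define A where "A = Omega \<alpha> \<inter> ball (x, F x) \<rho>"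
      have A1: "A \<in> sets lebesgue" using Omega_ball_fm by (simp add: A_def fmeasurableD)
      have A2: "A \<subseteq> cball (x, F x) \<rho>" using ball_subset_cball by (auto simp: A_def)
      have A3: "emeasure lebesgue A < \<infinity>" unfolding infinity_ennreal_def A_def
        using fmeasurableD2[OF Omega_ball_fm] by (simp only: top.not_eq_extremum)
      have "min (1/4) Cl * \<rho> powr (1 / \<alpha> + 1) \<le> Cl * \<rho> powr (1 / \<alpha> + 1)"
        using pwn by (intro mult_right_mono) auto
      also have "\<dots> \<le> measure lebesgue A" unfolding A_def using lo_ball \<rho> \<rho>b by simp
      finally have A4: "min (1/4) Cl * \<rho> powr (1 / \<alpha> + 1) \<le> measure lebesgue A" .
      have A5: "\<forall>Z\<in>A. 1/4 \<le> \<bar>ind Z - P Z\<bar>"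
      proof
        fix Z assume Z: "Z \<in> A"
        then have "ind Z = 1" by (simp add: A_def)
        moreover have "\<bar>P Z - P (x, F x)\<bar> < 1/4" using near Z by (simp add: A_def)
        ultimately show "1/4 \<le> \<bar>ind Z - P Z\<bar>" using False by linarith
      qed
      show ?thesis using A1 A2 A3 A4 A5 by blast
    qed
  qed
  then show ?thesis using \<rho>1p by blast
qed


lemma cball_sets: "cball (z::real\<times>real) r \<in> sets lebesgue"
  using lmeasurable_cball fmeasurableD by blast

lemma Tp_s: "1 \<le> p \<Longrightarrow> Tp p (1 / p * (1 / \<alpha> - 1)) ind (x, F x)"
proof -
  assume p: "1 \<le> p"
  define s where "s = 1 / p * (1 / \<alpha> - 1)"
  have s0: "0 \<le> s" using p a0 a1 by (simp add: s_def)
  define K where "K = Cu * 2 powr (1 / \<alpha> + 1)"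
  have Kp: "0 < K" using Cu_pos by (simp add: K_def)
  define C where "C = K powr (1 / p)"
  have Cp: "0 < C" using Kp by (simp add: C_def)
  have main1: "\<forall>\<rho>. 0 < \<rho> \<and> \<rho> \<le> \<delta>1 / 2 \<longrightarrow>
          (let I = \<integral>\<^sup>+ X. ennreal (\<bar>ind X - (\<lambda>_. 0) X\<bar> powr p) * indicator (cball (x, F x) \<rho>) X \<partial>lebesgue
           in I < \<infinity> \<and> (\<rho> powr (-2) * enn2real I) powr (1 / p) \<le> C * \<rho> powr s)"
  proof (intro allI impI)
    fix \<rho> :: real assume \<rho>: "0 < \<rho> \<and> \<rho> \<le> \<delta>1 / 2"
    have I: "(\<integral>\<^sup>+ X. ennreal (\<bar>ind X - (\<lambda>_. 0) X\<bar> powr p) * indicator (cball (x, F x) \<rho>) X \<partial>lebesgue)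
        = emeasure lebesgue (Omega \<alpha> \<inter> cball (x, F x) \<rho>)"
      using int_eq[of p "cball (x, F x) \<rho>"] p cball_sets by simp
    have sub: "Omega \<alpha> \<inter> cball (x, F x) \<rho> \<subseteq> Omega \<alpha> \<inter> ball (x, F x) (2 * \<rho>)" using \<rho> by auto
    have sc: "Omega \<alpha> \<inter> cball (x, F x) \<rho> \<in> sets lebesgue" by (intro sets.Int Omega_sets cball_sets)
    have "emeasure lebesgue (Omega \<alpha> \<inter> cball (x, F x) \<rho>) \<le> emeasure lebesgue (Omega \<alpha> \<inter> ball (x, F x) (2 * \<rho>))"
      using sub fmeasurableD[OF Omega_ball_fm] by (rule emeasure_mono)
    also have "\<dots> < \<infinity>" unfolding infinity_ennreal_def
      using fmeasurableD2[OF Omega_ball_fm] by (simp only: top.not_eq_extremum)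
    finally have fin: "emeasure lebesgue (Omega \<alpha> \<inter> cball (x, F x) \<rho>) < \<infinity>" .
    have "enn2real (emeasure lebesgue (Omega \<alpha> \<inter> cball (x, F x) \<rho>)) = measure lebesgue (Omega \<alpha> \<inter> cball (x, F x) \<rho>)"
      by (simp add: measure_def)
    also have "\<dots> \<le> measure lebesgue (Omega \<alpha> \<inter> ball (x, F x) (2 * \<rho>))"
      using measure_mono_fmeasurable[OF sub sc Omega_ball_fm] .
    also have "\<dots> \<le> Cu * (2 * \<rho>) powr (1 / \<alpha> + 1)" using up_ball[of "2 * \<rho>"] \<rho> by simp
    also have "\<dots> = K * \<rho> powr (1 / \<alpha> + 1)"
      using powr_mult[of 2 \<rho> "1 / \<alpha> + 1"] \<rho> unfolding K_def by (simp only: mult.assoc)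
    finally have m: "enn2real (emeasure lebesgue (Omega \<alpha> \<inter> cball (x, F x) \<rho>)) \<le> K * \<rho> powr (1 / \<alpha> + 1)" .
    have "\<rho> powr (-2) * enn2real (emeasure lebesgue (Omega \<alpha> \<inter> cball (x, F x) \<rho>)) \<le> \<rho> powr (-2) * (K * \<rho> powr (1 / \<alpha> + 1))"
      using m by (intro mult_left_mono) auto
    also have "\<dots> = K * \<rho> powr (1 / \<alpha> - 1)"
    proof -
      have e: "\<rho> powr (-2) * \<rho> powr (1 / \<alpha> + 1) = \<rho> powr (1 / \<alpha> - 1)"
        using powr_add[of \<rho> "-2" "1 / \<alpha> + 1"] by simp
      have "\<rho> powr (-2) * (K * \<rho> powr (1 / \<alpha> + 1)) = K * (\<rho> powr (-2) * \<rho> powr (1 / \<alpha> + 1))"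
        by (simp only: mult.left_commute)
      then show ?thesis using e by simp
    qed
    finally have a: "\<rho> powr (-2) * enn2real (emeasure lebesgue (Omega \<alpha> \<inter> cball (x, F x) \<rho>)) \<le> K * \<rho> powr (1 / \<alpha> - 1)" .
    have "(\<rho> powr (-2) * enn2real (emeasure lebesgue (Omega \<alpha> \<inter> cball (x, F x) \<rho>))) powr (1 / p)
        \<le> (K * \<rho> powr (1 / \<alpha> - 1)) powr (1 / p)"
      using a p by (intro powr_mono2) auto
    also have "\<dots> = C * \<rho> powr s"
    proof -
      have "(K * \<rho> powr (1 / \<alpha> - 1)) powr (1 / p) = K powr (1 / p) * (\<rho> powr (1 / \<alpha> - 1)) powr (1 / p)"
        using Kp by (simp add: powr_mult)
      also have "(\<rho> powr (1 / \<alpha> - 1)) powr (1 / p) = \<rho> powr s"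
        unfolding powr_powr s_def by (simp only: mult.commute)
      finally show ?thesis by (simp add: C_def)
    qed
    finally show "let I = \<integral>\<^sup>+ X. ennreal (\<bar>ind X - (\<lambda>_. 0) X\<bar> powr p) * indicator (cball (x, F x) \<rho>) X \<partial>lebesgue
           in I < \<infinity> \<and> (\<rho> powr (-2) * enn2real I) powr (1 / p) \<le> C * \<rho> powr s"
      unfolding Let_def I by (rule conjI[OF fin])
  qed
  have "- 2 / p \<le> 0" using p by simp
  then have main2: "- 2 / p \<le> s" using s0 by linarith
  show ?thesis unfolding Tp_def s_def[symmetric]
  proof (intro conjI)
    show "Lp_loc p ind" using Lp_loc_ind[OF p] .
    show "- 2 / p \<le> s" using main2 .
    show "\<exists>R C P. R > 0 \<and> C > 0 \<and> poly2_deg_le s P \<and>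
        (\<forall>\<rho>. 0 < \<rho> \<and> \<rho> \<le> R \<longrightarrow>
          (let I = \<integral>\<^sup>+ X. ennreal (\<bar>ind X - P X\<bar> powr p) * indicator (cball (x, F x) \<rho>) X \<partial>lebesgue
           in I < \<infinity> \<and> (\<rho> powr (-2) * enn2real I) powr (1 / p) \<le> C * \<rho> powr s))"
    proof (rule exI[of _ "\<delta>1 / 2"], rule exI[of _ C], rule exI[of _ "\<lambda>_. 0"], intro conjI)
      show "\<delta>1 / 2 > 0" using d1 by simp
      show "C > 0" using Cp .
      show "poly2_deg_le s (\<lambda>_. 0)" by (rule poly2_zero)
    qed (rule main1)
  qed
qed

end


context lmx begin

lemma Tp_le:
  assumes p: "1 \<le> p" and T: "Tp p u ind (x, F x)"
  shows "u \<le> 1 / p * (1 / \<alpha> - 1)"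
proof -
  from T obtain R C P where RC: "R > 0" "C > 0" "poly2_deg_le u P"
    and B: "\<forall>\<rho>. 0 < \<rho> \<and> \<rho> \<le> R \<longrightarrow>
          (let I = \<integral>\<^sup>+ X. ennreal (\<bar>ind X - P X\<bar> powr p) * indicator (cball (x, F x) \<rho>) X \<partial>lebesgue
           in I < \<infinity> \<and> (\<rho> powr (-2) * enn2real I) powr (1 / p) \<le> C * \<rho> powr u)"
    unfolding Tp_def by blast
  have Pc: "continuous_on UNIV P" by (rule poly2_cont[OF RC(3)])
  obtain \<rho>1 where \<rho>1: "\<rho>1 > 0" and L: "\<forall>\<rho>. 0 < \<rho> \<and> \<rho> \<le> \<rho>1 \<longrightarrow> (\<exists>A. A \<in> sets lebesgue \<and> A \<subseteq> cball (x, F x) \<rho> \<and>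
     emeasure lebesgue A < \<infinity> \<and> min (1/4) Cl * \<rho> powr (1 / \<alpha> + 1) \<le> measure lebesgue A \<and>
     (\<forall>Z\<in>A. 1/4 \<le> \<bar>ind Z - P Z\<bar>))"
    using low_sets[OF Pc] by blast
  define k where "k = (1/4) powr p * min (1/4) Cl"
  have kpos: "0 < k" using Cl_pos by (simp add: k_def)
  have main: "\<forall>\<rho>. 0 < \<rho> \<and> \<rho> \<le> min R \<rho>1 \<longrightarrow> k * \<rho> powr (1 / \<alpha> + 1) \<le> C powr p * \<rho> powr (u * p + 2)"
  proof (intro allI impI)
    fix \<rho> :: real assume \<rho>: "0 < \<rho> \<and> \<rho> \<le> min R \<rho>1"
    from L \<rho> obtain A where A: "A \<in> sets lebesgue" "A \<subseteq> cball (x, F x) \<rho>" "emeasure lebesgue A < \<infinity>"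
      "min (1/4) Cl * \<rho> powr (1 / \<alpha> + 1) \<le> measure lebesgue A" "\<forall>Z\<in>A. 1/4 \<le> \<bar>ind Z - P Z\<bar>"
      by auto
    define I where "I = (\<integral>\<^sup>+ X. ennreal (\<bar>ind X - P X\<bar> powr p) * indicator (cball (x, F x) \<rho>) X \<partial>lebesgue)"
    have BI: "I < \<infinity> \<and> (\<rho> powr (-2) * enn2real I) powr (1 / p) \<le> C * \<rho> powr u"
      using B \<rho> unfolding I_def Let_def by auto
    have I1: "I < \<infinity>" and I2: "(\<rho> powr (-2) * enn2real I) powr (1 / p) \<le> C * \<rho> powr u"
      using BI by auto
    have "(\<integral>\<^sup>+ X. ennreal ((1/4) powr p) * indicator A X \<partial>lebesgue) \<le> I"
      unfolding I_def
    proof (rule nn_integral_mono)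
      fix Z
      show "ennreal ((1/4) powr p) * indicator A Z \<le> ennreal (\<bar>ind Z - P Z\<bar> powr p) * indicator (cball (x, F x) \<rho>) Z"
      proof (cases "Z \<in> A")
        case True
        then have Zc: "Z \<in> cball (x, F x) \<rho>" using A(2) by auto
        have "(1/4) powr p \<le> \<bar>ind Z - P Z\<bar> powr p" using A(5) True p by (intro powr_mono2) auto
        then show ?thesis using True Zc by (simp add: ennreal_leI)
      next
        case False then show ?thesis by simp
      qed
    qed
    moreover have "(\<integral>\<^sup>+ X. ennreal ((1/4) powr p) * indicator A X \<partial>lebesgue) = ennreal ((1/4) powr p) * emeasure lebesgue A"
      using nn_integral_cmult_indicator[OF A(1)] by simp
    ultimately have le1: "ennreal ((1/4) powr p) * emeasure lebesgue A \<le> I" by simp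
    have "enn2real (ennreal ((1/4) powr p) * emeasure lebesgue A) \<le> enn2real I"
      using le1 I1 by (intro enn2real_mono) auto
    moreover have "enn2real (ennreal ((1/4) powr p) * emeasure lebesgue A) = (1/4) powr p * measure lebesgue A"
      by (simp add: enn2real_mult measure_def)
    ultimately have le2: "(1/4) powr p * measure lebesgue A \<le> enn2real I" by simp
    define a where "a = \<rho> powr (-2) * enn2real I"
    have a0: "0 \<le> a" by (simp add: a_def)
    have "a = (a powr (1 / p)) powr p" using a0 p by (simp add: powr_powr)
    also have "\<dots> \<le> (C * \<rho> powr u) powr p" using I2 p by (intro powr_mono2) (auto simp: a_def)
    also have "\<dots> = C powr p * \<rho> powr (u * p)" using RC \<rho> by (simp add: powr_mult powr_powr)
    finally have "\<rho> powr (-2) * enn2real I \<le> C powr p * \<rho> powr (u * p)" by (simp add: a_def)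
    then have "\<rho> powr 2 * (\<rho> powr (-2) * enn2real I) \<le> \<rho> powr 2 * (C powr p * \<rho> powr (u * p))"
      by (intro mult_left_mono) auto
    moreover have "\<rho> powr 2 * (\<rho> powr (-2) * enn2real I) = enn2real I"
    proof -
      have "\<rho> powr 2 * \<rho> powr (-2) = \<rho> powr (2 + -2)" by (simp only: powr_add)
      then have "\<rho> powr 2 * \<rho> powr (-2) = 1" using \<rho> by simp
      then show ?thesis by (simp add: mult.assoc[symmetric])
    qed
    moreover have "\<rho> powr 2 * (C powr p * \<rho> powr (u * p)) = C powr p * \<rho> powr (u * p + 2)"
      using \<rho> by (simp add: powr_add mult_ac)
    ultimately have le3: "enn2real I \<le> C powr p * \<rho> powr (u * p + 2)" by simp
    have "k * \<rho> powr (1 / \<alpha> + 1) = (1/4) powr p * (min (1/4) Cl * \<rho> powr (1 / \<alpha> + 1))"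
      by (simp add: k_def mult.assoc)
    also have "\<dots> \<le> (1/4) powr p * measure lebesgue A" using A(4) by (intro mult_left_mono) auto
    also have "\<dots> \<le> C powr p * \<rho> powr (u * p + 2)" using le2 le3 by simp
    finally show "k * \<rho> powr (1 / \<alpha> + 1) \<le> C powr p * \<rho> powr (u * p + 2)" .
  qed
  have mp: "0 < min R \<rho>1" using RC \<rho>1 by simp
  have "u * p + 2 \<le> 1 / \<alpha> + 1" using powr_cmp[OF kpos mp main] .
  then have "u * p \<le> 1 / \<alpha> - 1" by simp
  then show ?thesis using p by (simp add: field_simps)
qed

lemma Tinf_0: "Tinf 0 ind (x, F x)"
  unfolding Tinf_def
proof (intro conjI Linf_loc_ind order.refl)
  show "\<exists>R C P. R > 0 \<and> C > 0 \<and> poly2_deg_le 0 P \<and>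
        (\<forall>\<rho>. 0 < \<rho> \<and> \<rho> \<le> R \<longrightarrow>
          esssup (restrict_space lebesgue (cball (x, F x) \<rho>)) (\<lambda>X. ereal \<bar>ind X - P X\<bar>)
            \<le> ereal (C * \<rho> powr 0))"
  proof (rule exI[of _ 1], rule exI[of _ 1], rule exI[of _ "\<lambda>_. 0"], intro conjI allI impI)
    show "(0::real) < 1" by simp
    show "(0::real) < 1" by simp
    show "poly2_deg_le 0 (\<lambda>_. 0)" by (rule poly2_zero)
    fix \<rho> :: real assume "0 < \<rho> \<and> \<rho> \<le> 1"
    then show "esssup (restrict_space lebesgue (cball (x, F x) \<rho>)) (\<lambda>X. ereal \<bar>ind X - (\<lambda>_. 0) X\<bar>)
            \<le> ereal (1 * \<rho> powr 0)"
      using esssup_ind_le1[of "cball (x, F x) \<rho>"] by (simp add: one_ereal_def)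
  qed
qed

lemma Tinf_le:
  assumes T: "Tinf u ind (x, F x)"
  shows "u \<le> 0"
proof (rule ccontr)
  assume "\<not> u \<le> 0"
  then have up: "0 < u" by simp
  from T obtain R C P where RC: "R > 0" "C > 0" "poly2_deg_le u P"
    and B: "\<forall>\<rho>. 0 < \<rho> \<and> \<rho> \<le> R \<longrightarrow>
          esssup (restrict_space lebesgue (cball (x, F x) \<rho>)) (\<lambda>X. ereal \<bar>ind X - P X\<bar>)
            \<le> ereal (C * \<rho> powr u)"
    unfolding Tinf_def by blast
  have Pc: "continuous_on UNIV P" by (rule poly2_cont[OF RC(3)])
  obtain \<rho>1 where \<rho>1: "\<rho>1 > 0" and L: "\<forall>\<rho>. 0 < \<rho> \<and> \<rho> \<le> \<rho>1 \<longrightarrow> (\<exists>A. A \<in> sets lebesgue \<and> A \<subseteq> cball (x, F x) \<rho> \<and>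
     emeasure lebesgue A < \<infinity> \<and> min (1/4) Cl * \<rho> powr (1 / \<alpha> + 1) \<le> measure lebesgue A \<and>
     (\<forall>Z\<in>A. 1/4 \<le> \<bar>ind Z - P Z\<bar>))"
    using low_sets[OF Pc] by blast
  define \<rho> where "\<rho> = min (min R \<rho>1) ((1 / (8 * C)) powr (1 / u))"
  have \<rho>p: "0 < \<rho>" using RC \<rho>1 by (simp add: \<rho>_def)
  have \<rho>R: "\<rho> \<le> R" "\<rho> \<le> \<rho>1" by (auto simp: \<rho>_def)
  have "\<rho> powr u \<le> ((1 / (8 * C)) powr (1 / u)) powr u"
    using \<rho>p up by (intro powr_mono2) (auto simp: \<rho>_def)
  also have "\<dots> = 1 / (8 * C)" using up RC by (simp add: powr_powr)
  finally have "C * \<rho> powr u \<le> C * (1 / (8 * C))" using RC by (intro mult_left_mono) auto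
  then have small: "C * \<rho> powr u \<le> 1/8" using RC by simp
  from L \<rho>p \<rho>R obtain A where A: "A \<in> sets lebesgue" "A \<subseteq> cball (x, F x) \<rho>" "emeasure lebesgue A < \<infinity>"
      "min (1/4) Cl * \<rho> powr (1 / \<alpha> + 1) \<le> measure lebesgue A" "\<forall>Z\<in>A. 1/4 \<le> \<bar>ind Z - P Z\<bar>"
    by auto
  have "0 < min (1/4) Cl * \<rho> powr (1 / \<alpha> + 1)" using Cl_pos \<rho>p by simp
  then have mA: "0 < measure lebesgue A" using A(4) by linarith
  have emA: "0 < emeasure lebesgue A"
    using mA emeasure_eq_ennreal_measure[of lebesgue A] A(3) by (simp add: top.not_eq_extremum)
  define M where "M = restrict_space lebesgue (cball (x, F x) \<rho>)"
  have cs: "cball (x, F x) \<rho> \<inter> space lebesgue \<in> sets lebesgue" using cball_sets by simp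
  have AM: "A \<in> sets M" unfolding M_def using sets_restrict_space_iff[OF cs] A(1,2) by blast
  have eM: "emeasure M A = emeasure lebesgue A" unfolding M_def by (rule emeasure_restrict_space[OF cs A(2)])
  have "ereal (1/4) \<le> esssup M (\<lambda>X. ereal \<bar>ind X - P X\<bar>)"
    by (rule esssup_lower[OF AM]) (use emA eM A(5) in auto)
  also have "\<dots> \<le> ereal (C * \<rho> powr u)" using B \<rho>p \<rho>R unfolding M_def by auto
  finally have "1/4 \<le> C * \<rho> powr u" by simp
  then show False using small by simp
qed

lemma up_exp_ind: "1 \<le> p \<Longrightarrow> up_exp p ind (x, F x) = ereal (1 / p * (1 / \<alpha> - 1))"
  unfolding up_exp_def
proof (rule Sup_exact)
  assume p: "1 \<le> p"
  show "1 / p * (1 / \<alpha> - 1) \<in> {u. Tp p u ind (x, F x)}" using Tp_s[OF p] by (simp only: mem_Collect_eq)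
  fix \<beta> assume "\<beta> \<in> {u. Tp p u ind (x, F x)}"
  then show "\<beta> \<le> 1 / p * (1 / \<alpha> - 1)" using Tp_le[OF p] by blast
qed

lemma uinf_exp_ind: "uinf_exp ind (x, F x) = 0"
proof -
  have "uinf_exp ind (x, F x) = ereal 0"
    unfolding uinf_exp_def by (rule Sup_exact) (auto intro: Tinf_0 Tinf_le)
  then show ?thesis by (simp add: zero_ereal_def)
qed

end

theorem mainTheorem5:
  fixes \<alpha> x :: real
  assumes "0 < \<alpha>" "\<alpha> < 1"
    and "0 \<le> x" "x \<le> 1"
    and "\<exists>\<delta>>0. \<forall>t. 0 \<le> t \<and> t \<le> 1 \<and> \<bar>t - x\<bar> < \<delta> \<longrightarrow> Fw \<alpha> t \<le> Fw \<alpha> x"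
  defines "X \<equiv> (x, Fw \<alpha> x)"
    and "f \<equiv> indicator (Omega \<alpha>) :: real \<times> real \<Rightarrow> real"
  shows "Ew (Omega \<alpha>) X = ereal (1 / \<alpha> - 1) \<and> Es (Omega \<alpha>) X = ereal (1 / \<alpha> - 1) \<and>
         Ew (- Omega \<alpha>) X = 0 \<and> Es (- Omega \<alpha>) X = 0 \<and>
         (\<forall>p::real. 1 \<le> p \<longrightarrow> up_exp p f X = ereal (1 / p * (1 / \<alpha> - 1))) \<and>
         uinf_exp f X = 0"
proof -
  interpret alph \<alpha> using assms(1,2) by unfold_locales
  obtain \<delta> where \<delta>: "\<delta> > 0" "\<forall>t. 0 \<le> t \<and> t \<le> 1 \<and> \<bar>t - x\<bar> < \<delta> \<longrightarrow> Fw \<alpha> t \<le> Fw \<alpha> x"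
    using assms(5) by blast
  obtain \<delta>1 where d1: "\<delta>1 > 0" and dec: "\<forall>t. \<bar>t - x\<bar> \<le> \<delta>1 \<longrightarrow> 0 \<le> t \<and> t \<le> 1 \<and>
           cD * \<bar>t - x\<bar> powr \<alpha> \<le> Fw \<alpha> x - Fw \<alpha> t \<and> Fw \<alpha> x - Fw \<alpha> t \<le> KD * \<bar>t - x\<bar> powr \<alpha>"
    using locmax_decay[OF assms(3,4) \<delta>(1,2)] by blast
  interpret lmx \<alpha> x \<delta>1 by unfold_locales (use assms(1,2) d1 dec in auto)
  show ?thesis unfolding X_def f_def
    using Ew_Omega Es_Omega Ew_cOmega Es_cOmega up_exp_ind uinf_exp_ind by blast
qed

end
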